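(* Let $0<T\le1$ and $f\in_d A^M_T$. If there exists a step function $g\in_d E^M_T$ with $g(t)\ge f(t)$ for all $t\in(0,T)$, then $f\in_d I^M_T$.
   Context: Setting: intrinsic location functionals $L$ on a shift-invariant class $H$ of period-$1$ functions (maps $L:H\times\mathcal I\to\mathbb R\cup\{\infty\}$, $\mathcal I$ the compact nondegenerate intervals, that are measurable, satisfy $L(g,I)\in I\cup\{\infty\}$, $L(g,I)=L(\theta_cg,I-c)+c$ with $\theta_cg(x)=g(x+c)$, stability under restriction: $I_2\subseteq I_1$, $L(g,I_1)\in I_2\Rightarrow L(g,I_2)=L(g,I_1)$, and consistency of existence: $I_2\subseteq I_1$, $L(g,I_2)\ne\infty\Rightarrow L(g,I_1)\ne\infty$). $L$ is first-time if it admits a representation by sets $S(g)\subseteq\mathbb R$ with $S(g)=S(\theta_cg)+c$ and shift-compatible partial orders $\preceq$ on $S(g)$ such that $L(g,I)=\infty$ if $S(g)\cap I=\emptyset$ and otherwise is the unique $\preceq$-maximal element of $S(g)\cap I$, and in which $t_1\le t_2$ implies $t_2\preceq t_1$. A periodic stationary process with period $1$ is a stationary process with continuous period-$1$ sample paths in $H$. $I^M_T$ is the set of all laws of $L(\mathbf X,[0,T])$ over all first-time $L$ and all periodic stationary $\mathbf X$ with period $1$. $A^M_T$ is the class of probability distributions on $[0,T]\cup\{\infty\}$ absolutely continuous on $(0,T)$ with càdlàg non-increasing density there. $E^M_T$ is the class of probability distributions $F$ on $[0,T]\cup\{\infty\}$, absolutely continuous on $(0,T)$ with $F(\{T\})=0$,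 whose càdlàg density $f$ on $(0,T)$ is non-increasing, takes non-negative integer values, satisfies $\mathrm{TV}_{(t_1,t_2)}(f)\le f(t_1)+f(t_2)$ for $0<t_1<t_2<T$, and satisfies: if $F([0,T])>0$ and no $t\in(0,T)$ has $F([0,t])=1$ or $F([t,T])=1$, then $f\ge1$ on $(0,T)$ (and, if also $F(\{\infty\})>0$, $f-1$ satisfies the same variation inequality). For a set $A$ of distributions, $f\in_d A$ means some $F\in A$ has density $f$ on $(0,T)$. *)

theory Defs
  imports "HOL-Probability.Probability"
begin

definition shift :: "real \<Rightarrow> (real \<Rightarrow> real) \<Rightarrow> (real \<Rightarrow> real)" where
  "shift c g = (\<lambda>x. g (x + c))"

definition period1 :: "(real \<Rightarrow> real) \<Rightarrow> bool" where
  "period1 g \<longleftrightarrow> (\<forall>x. g (x + 1) = g x)"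

definition shift_inv_class :: "(real \<Rightarrow> real) set \<Rightarrow> bool" where
  "shift_inv_class H \<longleftrightarrow> (\<forall>g\<in>H. period1 g) \<and> (\<forall>g\<in>H. \<forall>c. shift c g \<in> H)"

definition cintervals :: "real set set" where
  "cintervals = {{a..b} | a b. a < b}"

abbreviation path_space :: "(real \<Rightarrow> real) measure" where
  "path_space \<equiv> Pi\<^sub>M UNIV (\<lambda>_. borel)"

definition intrinsic_location :: "(real \<Rightarrow> real) set \<Rightarrow> ((real \<Rightarrow> real) \<Rightarrow> real set \<Rightarrow> ereal) \<Rightarrow> bool" where
  "intrinsic_location H L \<longleftrightarrow>
     shift_inv_class H \<and>
     (\<forall>I\<in>cintervals. (\<lambda>g. L g I) \<in> measurable (restrict_space path_space H) borel) \<and>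
     (\<forall>g\<in>H. \<forall>I\<in>cintervals. L g I \<in> ereal ` I \<union> {\<infinity>}) \<and>
     (\<forall>g\<in>H. \<forall>I\<in>cintervals. \<forall>c. L g I = L (shift c g) ((\<lambda>x. x - c) ` I) + ereal c) \<and>
     (\<forall>g\<in>H. \<forall>I1\<in>cintervals. \<forall>I2\<in>cintervals. I2 \<subseteq> I1 \<longrightarrow> L g I1 \<in> ereal ` I2 \<longrightarrow> L g I2 = L g I1) \<and>
     (\<forall>g\<in>H. \<forall>I1\<in>cintervals. \<forall>I2\<in>cintervals. I2 \<subseteq> I1 \<longrightarrow> L g I2 \<noteq> \<infinity> \<longrightarrow> L g I1 \<noteq> \<infinity>)"

definition maximal_elems :: "(real \<Rightarrow> real \<Rightarrow> bool) \<Rightarrow> real set \<Rightarrow> real set" where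
  "maximal_elems R A = {m \<in> A. \<forall>t\<in>A. R m t \<longrightarrow> t = m}"

text \<open>First-time intrinsic location functionals: representation by sets S(g) and
  shift-compatible partial orders P g (P g s t means s \<preceq> t) on S(g).\<close>
definition first_time :: "(real \<Rightarrow> real) set \<Rightarrow> ((real \<Rightarrow> real) \<Rightarrow> real set \<Rightarrow> ereal) \<Rightarrow> bool" where
  "first_time H L \<longleftrightarrow> intrinsic_location H L \<and>
     (\<exists>(S :: (real \<Rightarrow> real) \<Rightarrow> real set) (P :: (real \<Rightarrow> real) \<Rightarrow> real \<Rightarrow> real \<Rightarrow> bool).
        (\<forall>g\<in>H. \<forall>c. S g = (\<lambda>t. t + c) ` S (shift c g)) \<and>
        (\<forall>g\<in>H. partial_order_on (S g) {(s, t). s \<in> S g \<and> t \<in> S g \<and> P g s t}) \<and>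
        (\<forall>g\<in>H. \<forall>c. \<forall>s\<in>S g. \<forall>t\<in>S g. P g s t \<longleftrightarrow> P (shift c g) (s - c) (t - c)) \<and>
        (\<forall>g\<in>H. \<forall>I\<in>cintervals.
            (S g \<inter> I = {} \<longrightarrow> L g I = \<infinity>) \<and>
            (S g \<inter> I \<noteq> {} \<longrightarrow> (\<exists>m. maximal_elems (P g) (S g \<inter> I) = {m} \<and> L g I = ereal m))) \<and>
        (\<forall>g\<in>H. \<forall>s\<in>S g. \<forall>t\<in>S g. s \<le> t \<longrightarrow> P g t s))"

definition periodic_stationary :: "(real \<Rightarrow> real) set \<Rightarrow> (real \<Rightarrow> real) measure \<Rightarrow> ((real \<Rightarrow> real) \<Rightarrow> (real \<Rightarrow> real)) \<Rightarrow> bool" where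
  "periodic_stationary H M X \<longleftrightarrow>
     prob_space M \<and> X \<in> measurable M path_space \<and>
     (\<forall>\<omega>\<in>space M. X \<omega> \<in> H \<and> continuous_on UNIV (X \<omega>) \<and> period1 (X \<omega>)) \<and>
     (\<forall>c. distr M path_space (\<lambda>\<omega>. shift c (X \<omega>)) = distr M path_space X)"

definition distr_on :: "real \<Rightarrow> ereal measure \<Rightarrow> bool" where
  "distr_on T F \<longleftrightarrow> prob_space F \<and> sets F = sets (borel :: ereal measure) \<and>
     emeasure F (UNIV - ({ereal 0..ereal T} \<union> {\<infinity>})) = 0"

definition density_on :: "ereal measure \<Rightarrow> real \<Rightarrow> (real \<Rightarrow> real) \<Rightarrow> bool" where
  "density_on F T f \<longleftrightarrow> (\<forall>t\<in>{0<..<T}. 0 \<le> f t) \<and> set_borel_measurable lborel {0<..<T} f \<and>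
     (\<forall>A\<in>sets (borel :: real measure). A \<subseteq> {0<..<T} \<longrightarrow>
        emeasure F (ereal ` A) = (\<integral>\<^sup>+ x\<in>A. ennreal (f x) \<partial>lborel))"

definition in_d :: "(real \<Rightarrow> real) \<Rightarrow> real \<Rightarrow> ereal measure set \<Rightarrow> bool" where
  "in_d f T \<A> \<longleftrightarrow> (\<exists>F\<in>\<A>. density_on F T f)"

definition cadlag_on :: "(real \<Rightarrow> real) \<Rightarrow> real \<Rightarrow> real \<Rightarrow> bool" where
  "cadlag_on f a b \<longleftrightarrow> (\<forall>t\<in>{a<..<b}. continuous (at_right t) f \<and> (\<exists>l. (f \<longlongrightarrow> l) (at_left t)))"

definition nonincr_on :: "(real \<Rightarrow> real) \<Rightarrow> real \<Rightarrow> real \<Rightarrow> bool" where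
  "nonincr_on f a b \<longleftrightarrow> (\<forall>x y. a < x \<longrightarrow> x \<le> y \<longrightarrow> y < b \<longrightarrow> f y \<le> f x)"

definition tv_open :: "(real \<Rightarrow> real) \<Rightarrow> real \<Rightarrow> real \<Rightarrow> ereal" where
  "tv_open f a b = (SUP xs \<in> {xs. sorted xs \<and> set xs \<subseteq> {a<..<b}}.
      ereal (\<Sum>i < length xs - 1. \<bar>f (xs ! Suc i) - f (xs ! i)\<bar>))"

definition var_ineq :: "(real \<Rightarrow> real) \<Rightarrow> real \<Rightarrow> bool" where
  "var_ineq f T \<longleftrightarrow> (\<forall>t1 t2. 0 < t1 \<longrightarrow> t1 < t2 \<longrightarrow> t2 < T \<longrightarrow> tv_open f t1 t2 \<le> ereal (f t1 + f t2))"

definition A_M :: "real \<Rightarrow> ereal measure set" where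
  "A_M T = {F. distr_on T F \<and> (\<exists>f. density_on F T f \<and> cadlag_on f 0 T \<and> nonincr_on f 0 T)}"

definition E_M :: "real \<Rightarrow> ereal measure set" where
  "E_M T = {F. distr_on T F \<and> emeasure F {ereal T} = 0 \<and>
     (\<exists>f. density_on F T f \<and> cadlag_on f 0 T \<and> nonincr_on f 0 T \<and>
        (\<forall>t\<in>{0<..<T}. f t \<in> \<int>) \<and> var_ineq f T \<and>
        ((emeasure F {ereal 0..ereal T} > 0 \<and>
          \<not> (\<exists>t\<in>{0<..<T}. emeasure F {ereal 0..ereal t} = 1 \<or> emeasure F {ereal t..ereal T} = 1))
         \<longrightarrow> (\<forall>t\<in>{0<..<T}. f t \<ge> 1) \<and>
             (emeasure F {\<infinity>} > 0 \<longrightarrow> var_ineq (\<lambda>t. f t - 1) T)))}"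

definition I_M :: "real \<Rightarrow> ereal measure set" where
  "I_M T = {distr M (borel :: ereal measure) (\<lambda>\<omega>. L (X \<omega>) {0..T}) | H L M X.
      first_time H L \<and> periodic_stationary H M X}"

definition step_fun_on :: "(real \<Rightarrow> real) \<Rightarrow> real \<Rightarrow> real \<Rightarrow> bool" where
  "step_fun_on g a b \<longleftrightarrow> (\<exists>P. finite P \<and>
     (\<forall>x\<in>{a<..<b}. \<forall>y\<in>{a<..<b}. x \<le> y \<longrightarrow> {x..y} \<inter> P = {} \<longrightarrow> g x = g y))"

end

theory Submission
  imports Defs
begin

definition Hc :: "(real \<Rightarrow> real) set" where
  "Hc = {g. continuous_on UNIV g \<and> period1 g}"

definition Lz :: "(real \<Rightarrow> real) \<Rightarrow> real set \<Rightarrow> ereal" where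
  "Lz g I = (if \<exists>x\<in>I. g x = 0 then ereal (Inf {x\<in>I. g x = 0}) else \<infinity>)"

lemma zero_set_closed:
  fixes g :: "real \<Rightarrow> real"
  assumes "continuous_on UNIV g"
  shows "closed {x\<in>{a..b}. g x = (0::real)}"
proof -
  have "closed {x. g x = 0}"
    using assms by (intro closed_Collect_eq) (auto intro: continuous_intros)
  then have "closed ({a..b} \<inter> {x. g x = 0})" by (intro closed_Int) (auto simp: closed_atLeastAtMost)
  then show ?thesis by (simp add: Int_def)
qed

lemma zero_min:
  fixes g :: "real \<Rightarrow> real"
  assumes "continuous_on UNIV g" "\<exists>x\<in>{a..b}. g x = 0"
  shows "Inf {x\<in>{a..b}. g x = 0} \<in> {x\<in>{a..b}. g x = (0::real)}"
    "\<And>y. y \<in> {x\<in>{a..b}. g x = 0} \<Longrightarrow> Inf {x\<in>{a..b}. g x = 0} \<le> y"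
proof -
  show "Inf {x\<in>{a..b}. g x = 0} \<in> {x\<in>{a..b}. g x = (0::real)}"
  proof (rule closed_contains_Inf)
    show "bdd_below {x\<in>{a..b}. g x = 0}" by (rule bdd_belowI[of _ a]) auto
  qed (use assms zero_set_closed[OF assms(1), of a b] in auto)
  show "\<And>y. y \<in> {x\<in>{a..b}. g x = 0} \<Longrightarrow> Inf {x\<in>{a..b}. g x = 0} \<le> y"
    by (intro cInf_lower) (auto simp: bdd_below_def)
qed

lemma space_path_space: "space path_space = UNIV"
  by (simp add: space_PiM)

lemma zero_exists_iff:
  fixes g :: "real \<Rightarrow> real"
  assumes g: "continuous_on UNIV g" and ac: "a \<le> c"
  shows "(\<exists>x\<in>{a..c}. g x = 0) \<longleftrightarrow>
     (\<forall>n::nat. \<exists>q\<in>insert a (\<rat> \<inter> {a..c}). \<bar>g q\<bar> < 1 / Suc n)"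
proof
  assume "\<exists>x\<in>{a..c}. g x = 0"
  then obtain x where x: "x \<in> {a..c}" "g x = 0" by auto
  show "\<forall>n::nat. \<exists>q\<in>insert a (\<rat> \<inter> {a..c}). \<bar>g q\<bar> < 1 / Suc n"
  proof
    fix n :: nat
    have e: "(0::real) < 1 / Suc n" by simp
    have "isCont g x" using g by (simp add: continuous_on_eq_continuous_at)
    then obtain d where d: "d > 0" "\<And>y. \<bar>y - x\<bar> < d \<Longrightarrow> \<bar>g y - g x\<bar> < 1 / Suc n"
      using e unfolding continuous_at_eps_delta dist_real_def by blast
    show "\<exists>q\<in>insert a (\<rat> \<inter> {a..c}). \<bar>g q\<bar> < 1 / Suc n"
    proof (cases "x = a")
      case True then show ?thesis using x by auto
    next
      case False
      then have "max a (x - d) < x" using x d by auto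
      then obtain r where r: "r \<in> \<rat>" "max a (x - d) < r" "r < x"
        using Rats_dense_in_real by blast
      then have "\<bar>r - x\<bar> < d" by auto
      then have "\<bar>g r\<bar> < 1 / Suc n" using d(2)[of r] x by auto
      moreover have "r \<in> \<rat> \<inter> {a..c}" using r x by auto
      ultimately show ?thesis by blast
    qed
  qed
next
  assume H: "\<forall>n::nat. \<exists>q\<in>insert a (\<rat> \<inter> {a..c}). \<bar>g q\<bar> < 1 / Suc n"
  have "continuous_on {a..c} (\<lambda>x. \<bar>g x\<bar>)"
    using g by (intro continuous_intros) (auto intro: continuous_on_subset)
  then obtain x where x: "x \<in> {a..c}" "\<And>y. y \<in> {a..c} \<Longrightarrow> \<bar>g x\<bar> \<le> \<bar>g y\<bar>"
    using continuous_attains_inf[of "{a..c}" "\<lambda>x. \<bar>g x\<bar>"] ac by auto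
  have "\<bar>g x\<bar> \<le> 0"
  proof (rule field_le_epsilon)
    fix e :: real assume "e > 0"
    then obtain n :: nat where n: "1 / Suc n < e"
      by (metis nat_approx_posE)
    obtain q where q: "q \<in> insert a (\<rat> \<inter> {a..c})" "\<bar>g q\<bar> < 1 / Suc n" using H by blast
    have "q \<in> {a..c}" using q(1) ac by auto
    then have "\<bar>g x\<bar> \<le> \<bar>g q\<bar>" using x(2) by auto
    then show "\<bar>g x\<bar> \<le> 0 + e" using q(2) n by linarith
  qed
  then show "\<exists>x\<in>{a..c}. g x = 0" using x(1) by auto
qed

lemma zero_exists_meas:
  assumes ac: "a \<le> c"
  shows "{g \<in> Hc. \<exists>x\<in>{a..c}. g x = 0} \<in> sets (restrict_space path_space Hc)"
proof -
  let ?D = "insert a (\<rat> \<inter> {a..c})"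
  let ?B = "\<Inter>n::nat. \<Union>q\<in>?D. {g::real\<Rightarrow>real. \<bar>g q\<bar> < 1 / Suc n}"
  have cD: "countable ?D" using countable_rat by auto
  have base: "{g::real\<Rightarrow>real. \<bar>g q\<bar> < 1 / Suc n} \<in> sets path_space" for q n
  proof -
    have "{g \<in> space path_space. \<bar>g q\<bar> < 1 / Suc n} \<in> sets path_space"
      by measurable
    then show ?thesis by (simp add: space_path_space)
  qed
  have un: "(\<Union>q\<in>?D. {g::real\<Rightarrow>real. \<bar>g q\<bar> < 1 / Suc n}) \<in> sets path_space" for n
    by (rule sets.countable_UN'[OF cD]) (use base in auto)
  have "?B \<in> sets path_space"
    by (rule sets.countable_INT') (use un in auto)
  moreover have "{g \<in> Hc. \<exists>x\<in>{a..c}. g x = 0} = Hc \<inter> ?B"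
    using zero_exists_iff[OF _ ac] by (auto simp: Hc_def)
  ultimately show ?thesis
    by (auto simp: sets_restrict_space space_path_space)
qed

lemma Lz_eq:
  fixes g :: "real \<Rightarrow> real"
  assumes "m \<in> I" "g m = 0" "\<And>y. y \<in> I \<Longrightarrow> g y = 0 \<Longrightarrow> m \<le> y"
  shows "Lz g I = ereal m"
proof -
  have "Inf {x\<in>I. g x = 0} = m" by (rule cInf_eq_minimum) (use assms in auto)
  then show ?thesis using assms unfolding Lz_def by auto
qed

lemma Lz_inf: "\<not> (\<exists>x\<in>I. g x = 0) \<Longrightarrow> Lz g I = \<infinity>"
  unfolding Lz_def by auto

lemma Lz_min:
  fixes g :: "real \<Rightarrow> real"
  assumes "continuous_on UNIV g" "\<exists>x\<in>{a..b}. g x = 0"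
  shows "\<exists>m. m \<in> {a..b} \<and> g m = 0 \<and> (\<forall>y\<in>{a..b}. g y = 0 \<longrightarrow> m \<le> y) \<and> Lz g {a..b} = ereal m"
proof -
  let ?m = "Inf {x\<in>{a..b}. g x = 0}"
  have 1: "?m \<in> {a..b}" "g ?m = 0" using zero_min(1)[OF assms] by auto
  have 2: "\<forall>y\<in>{a..b}. g y = 0 \<longrightarrow> ?m \<le> y" using zero_min(2)[OF assms] by auto
  show ?thesis using 1 2 Lz_eq[of ?m "{a..b}" g] by blast
qed

lemma Lz_meas:
  "(\<lambda>g. Lz g {a..b}) \<in> borel_measurable (restrict_space path_space Hc)"
proof (rule borel_measurableI_le)
  fix y :: ereal
  have sp: "space (restrict_space path_space Hc) = Hc"
    by (simp add: space_restrict_space space_path_space)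
  show "{g \<in> space (restrict_space path_space Hc). Lz g {a..b} \<le> y} \<in> sets (restrict_space path_space Hc)"
  proof (cases y)
    case (real s)
    show ?thesis
    proof (cases "a \<le> min b s")
      case True
      have "{g \<in> space (restrict_space path_space Hc). Lz g {a..b} \<le> y} =
            {g \<in> Hc. \<exists>x\<in>{a..min b s}. g x = 0}"
      proof (intro set_eqI iffI)
        fix g assume g: "g \<in> {g \<in> space (restrict_space path_space Hc). Lz g {a..b} \<le> y}"
        then have gc: "continuous_on UNIV g" "g \<in> Hc" using sp by (auto simp: Hc_def)
        have ex: "\<exists>x\<in>{a..b}. g x = 0"
        proof (rule ccontr)
          assume "\<not> (\<exists>x\<in>{a..b}. g x = 0)"
          then have "Lz g {a..b} = \<infinity>" by (rule Lz_inf)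
          then show False using g real by simp
        qed
        obtain m where m: "m \<in> {a..b}" "g m = 0" "Lz g {a..b} = ereal m"
          using Lz_min[OF gc(1) ex] by auto
        have "m \<le> s" using g m real by auto
        then show "g \<in> {g \<in> Hc. \<exists>x\<in>{a..min b s}. g x = 0}" using m gc by auto
      next
        fix g assume g: "g \<in> {g \<in> Hc. \<exists>x\<in>{a..min b s}. g x = 0}"
        then have gc: "continuous_on UNIV g" "g \<in> Hc" by (auto simp: Hc_def)
        obtain x where x: "x \<in> {a..min b s}" "g x = 0" using g by auto
        have ex: "\<exists>x\<in>{a..b}. g x = 0" using x by auto
        obtain m where m: "m \<in> {a..b}" "g m = 0" "\<forall>y\<in>{a..b}. g y = 0 \<longrightarrow> m \<le> y" "Lz g {a..b} = ereal m"
          using Lz_min[OF gc(1) ex] by auto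
        have "m \<le> x" using m(3) x by auto
        then have "m \<le> s" using x by auto
        then show "g \<in> {g \<in> space (restrict_space path_space Hc). Lz g {a..b} \<le> y}"
          using m real sp gc by auto
      qed
      then show ?thesis using zero_exists_meas[OF True] by simp
    next
      case False
      have "{g \<in> space (restrict_space path_space Hc). Lz g {a..b} \<le> y} = {}"
      proof (rule ccontr)
        assume "\<not> ?thesis"
        then obtain g where g: "g \<in> Hc" "Lz g {a..b} \<le> ereal s" using sp real by auto
        then have gc: "continuous_on UNIV g" by (auto simp: Hc_def)
        have ex: "\<exists>x\<in>{a..b}. g x = 0"
        proof (rule ccontr)
          assume "\<not> (\<exists>x\<in>{a..b}. g x = 0)"
          then have "Lz g {a..b} = \<infinity>" by (rule Lz_inf)
          then show False using g by simp
        qed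
        obtain m where m: "m \<in> {a..b}" "Lz g {a..b} = ereal m"
          using Lz_min[OF gc ex] by auto
        then have "m \<le> s" using g by auto
        then show False using m False by auto
      qed
      then show ?thesis by (metis sets.empty_sets)
    qed
  next
    case PInf
    then have "{g \<in> space (restrict_space path_space Hc). Lz g {a..b} \<le> y} = space (restrict_space path_space Hc)"
      by auto
    then show ?thesis by simp
  next
    case MInf
    have "Lz g {a..b} \<noteq> -\<infinity>" for g unfolding Lz_def by auto
    then have "{g \<in> space (restrict_space path_space Hc). Lz g {a..b} \<le> y} = {}"
      using MInf by auto
    then show ?thesis by (metis sets.empty_sets)
  qed
qed

lemma cintervalsE: "I \<in> cintervals \<Longrightarrow> (\<And>a b. I = {a..b} \<Longrightarrow> a < b \<Longrightarrow> P) \<Longrightarrow> P"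
  unfolding cintervals_def by auto

lemma shift_Hc: "g \<in> Hc \<Longrightarrow> shift c g \<in> Hc"
proof -
  assume g: "g \<in> Hc"
  have gc: "continuous_on UNIV g" using g unfolding Hc_def by auto
  have "continuous_on UNIV (\<lambda>x. g (x + c))"
    by (rule continuous_on_compose2[OF gc]) (auto intro!: continuous_intros)
  moreover have "period1 (\<lambda>x. g (x + c))"
    unfolding period1_def
  proof
    fix x
    have "g ((x + c) + 1) = g (x + c)" using g unfolding Hc_def period1_def by blast
    then show "g (x + 1 + c) = g (x + c)" by (simp add: ac_simps)
  qed
  ultimately show ?thesis unfolding Hc_def shift_def by auto
qed

lemma image_minus_Icc: "(\<lambda>x. x - c) ` {a..b} = {a - c..b - (c::real)}"
proof (intro set_eqI iffI)
  fix x assume "x \<in> {a - c..b - c}"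
  then show "x \<in> (\<lambda>x. x - c) ` {a..b}" by (intro image_eqI[of _ _ "x + c"]) auto
qed auto

lemma Lz_shift:
  assumes g: "g \<in> Hc"
  shows "Lz g {a..b} = Lz (shift c g) {a - c..b - c} + ereal c"
proof (cases "\<exists>x\<in>{a..b}. g x = 0")
  case True
  have gc: "continuous_on UNIV g" using g by (auto simp: Hc_def)
  obtain m where m: "m \<in> {a..b}" "g m = 0" "\<forall>y\<in>{a..b}. g y = 0 \<longrightarrow> m \<le> y" "Lz g {a..b} = ereal m"
    using Lz_min[OF gc True] by auto
  have "Lz (shift c g) {a - c..b - c} = ereal (m - c)"
  proof (rule Lz_eq)
    show "m - c \<in> {a - c..b - c}" using m(1) by auto
    show "shift c g (m - c) = 0" using m(2) by (simp add: shift_def)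
    fix y assume y: "y \<in> {a - c..b - c}" "shift c g y = 0"
    have "y + c \<in> {a..b}" "g (y + c) = 0" using y by (auto simp: shift_def)
    then have "m \<le> y + c" using m(3) by blast
    then show "m - c \<le> y" by simp
  qed
  then show ?thesis using m by simp
next
  case False
  have "\<not> (\<exists>x\<in>{a - c..b - c}. shift c g x = 0)"
  proof
    assume "\<exists>x\<in>{a - c..b - c}. shift c g x = 0"
    then obtain x where x: "x \<in> {a - c..b - c}" "g (x + c) = 0" by (auto simp: shift_def)
    have "x + c \<in> {a..b}" using x(1) by auto
    then show False using False x(2) by blast
  qed
  then show ?thesis using False by (simp add: Lz_inf)
qed

lemma intrinsic_Lz: "intrinsic_location Hc Lz"
  unfolding intrinsic_location_def
proof (intro conjI ballI allI impI)
  show "shift_inv_class Hc" unfolding shift_inv_class_def using shift_Hc by (auto simp: Hc_def)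
next
  fix I assume "I \<in> cintervals"
  then show "(\<lambda>g. Lz g I) \<in> restrict_space path_space Hc \<rightarrow>\<^sub>M borel"
    by (elim cintervalsE) (simp add: Lz_meas)
next
  fix g I assume g: "g \<in> Hc" and I: "I \<in> cintervals"
  have gc: "continuous_on UNIV g" using g by (auto simp: Hc_def)
  show "Lz g I \<in> ereal ` I \<union> {\<infinity>}"
  proof (rule cintervalsE[OF I])
    fix a b assume I: "I = {a..b}"
    show ?thesis
    proof (cases "\<exists>x\<in>{a..b}. g x = 0")
      case True then show ?thesis using Lz_min[OF gc True] I by auto
    next
      case False then show ?thesis using I by (simp add: Lz_inf)
    qed
  qed
next
  fix g I c assume g: "g \<in> Hc" and I: "I \<in> cintervals"
  show "Lz g I = Lz (shift c g) ((\<lambda>x. x - c) ` I) + ereal c"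
    by (rule cintervalsE[OF I]) (simp add: image_minus_Icc Lz_shift[OF g])
next
  fix g I1 I2 assume g: "g \<in> Hc" and I1: "I1 \<in> cintervals" and I2: "I2 \<in> cintervals"
    and sub: "I2 \<subseteq> I1" and L: "Lz g I1 \<in> ereal ` I2"
  have gc: "continuous_on UNIV g" using g by (auto simp: Hc_def)
  show "Lz g I2 = Lz g I1"
  proof (rule cintervalsE[OF I1])
    fix a b assume I1e: "I1 = {a..b}"
    have True: "\<exists>x\<in>{a..b}. g x = 0"
    proof (rule ccontr)
      assume "\<not> (\<exists>x\<in>{a..b}. g x = 0)"
      then have "Lz g I1 = \<infinity>" using I1e by (simp add: Lz_inf)
      then show False using L by auto
    qed
    obtain m where m: "m \<in> {a..b}" "g m = 0" "\<forall>y\<in>{a..b}. g y = 0 \<longrightarrow> m \<le> y" "Lz g {a..b} = ereal m"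
      using Lz_min[OF gc True] by auto
    have "m \<in> I2" using L m I1e by auto
    then have "Lz g I2 = ereal m"
      by (rule Lz_eq) (use m sub I1e in auto)
    then show ?thesis using m I1e by simp
  qed
next
  fix g I1 I2 assume "I2 \<subseteq> I1" and "Lz g I2 \<noteq> \<infinity>"
  then show "Lz g I1 \<noteq> \<infinity>" unfolding Lz_def by (auto split: if_splits)
qed

lemma Lz_S_aux:
  assumes g: "g \<in> Hc" and I: "I \<in> cintervals"
  shows "({x. g x = 0} \<inter> I = {} \<longrightarrow> Lz g I = \<infinity>) \<and>
        ({x. g x = 0} \<inter> I \<noteq> {} \<longrightarrow>
         (\<exists>m. maximal_elems (\<lambda>s t. t \<le> s) ({x. g x = 0} \<inter> I) = {m} \<and> Lz g I = ereal m))"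
proof -
  have gc: "continuous_on UNIV g" using g by (auto simp: Hc_def)
  show ?thesis
  proof (rule cintervalsE[OF I])
    fix a b assume Ie: "I = {a..b}"
    show ?thesis
    proof (intro conjI impI)
      assume "{x. g x = 0} \<inter> I = {}"
      then show "Lz g I = \<infinity>" by (intro Lz_inf) auto
    next
      assume "{x. g x = 0} \<inter> I \<noteq> {}"
      then have True: "\<exists>x\<in>{a..b}. g x = 0" using Ie by auto
      obtain m where m: "m \<in> {a..b}" "g m = 0" "\<forall>y\<in>{a..b}. g y = 0 \<longrightarrow> m \<le> y" "Lz g {a..b} = ereal m"
        using Lz_min[OF gc True] by auto
      have "maximal_elems (\<lambda>s t. t \<le> s) ({x. g x = 0} \<inter> I) = {m}"
      proof (intro set_eqI iffI)
        fix x assume "x \<in> maximal_elems (\<lambda>s t. t \<le> s) ({x. g x = 0} \<inter> I)"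
        then have x: "x \<in> {a..b}" "g x = 0" "\<And>t. t \<in> {x. g x = 0} \<inter> I \<Longrightarrow> t \<le> x \<Longrightarrow> t = x"
          unfolding maximal_elems_def Ie by auto
        have "m \<le> x" using m(3) x(1,2) by blast
        then have "m = x" using x(3)[of m] m(1,2) Ie by auto
        then show "x \<in> {m}" by simp
      next
        fix x assume "x \<in> {m}"
        then have xm: "x = m" by simp
        have "\<And>t. t \<in> {x. g x = 0} \<inter> I \<Longrightarrow> t \<le> m \<Longrightarrow> t = m"
        proof -
          fix t assume t: "t \<in> {x. g x = 0} \<inter> I" "t \<le> m"
          have "m \<le> t" using m(3) t(1) Ie by blast
          then show "t = m" using t(2) by simp
        qed
        then show "x \<in> maximal_elems (\<lambda>s t. t \<le> s) ({x. g x = 0} \<inter> I)"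
          unfolding maximal_elems_def using xm m(1,2) Ie by blast
      qed
      then show "\<exists>m. maximal_elems (\<lambda>s t. t \<le> s) ({x. g x = 0} \<inter> I) = {m} \<and> Lz g I = ereal m"
        using m Ie by auto
    qed
  qed
qed

lemma first_time_Lz: "first_time Hc Lz"
  unfolding first_time_def
proof (intro conjI intrinsic_Lz exI[of _ "\<lambda>g. {x. g x = 0}"] exI[of _ "\<lambda>g s t. t \<le> s"] ballI allI)
  fix g :: "real \<Rightarrow> real" and c
  show "{x. g x = 0} = (\<lambda>t. t + c) ` {x. shift c g x = 0}"
  proof (intro set_eqI iffI)
    fix x assume "x \<in> {x. g x = 0}"
    then show "x \<in> (\<lambda>t. t + c) ` {x. shift c g x = 0}"
      by (intro image_eqI[of _ _ "x - c"]) (auto simp: shift_def)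
  qed (auto simp: shift_def)
next
  fix g :: "real \<Rightarrow> real"
  show "partial_order_on {x. g x = 0} {(s, t). s \<in> {x. g x = 0} \<and> t \<in> {x. g x = 0} \<and> t \<le> s}"
    unfolding partial_order_on_def preorder_on_def refl_on_def trans_on_def antisym_on_def
    by auto
next
  fix g :: "real \<Rightarrow> real" and c s t :: real
  show "(t \<le> s) = (t - c \<le> s - c)" by auto
next
  fix g and I assume g: "g \<in> Hc" and I: "I \<in> cintervals"
  then show "{x. g x = 0} \<inter> I = {} \<longrightarrow> Lz g I = \<infinity>" using Lz_S_aux by blast
next
  fix g and I assume g: "g \<in> Hc" and I: "I \<in> cintervals"
  then show "{x. g x = 0} \<inter> I \<noteq> {} \<longrightarrow> (\<exists>m. maximal_elems (\<lambda>s t. t \<le> s) ({x. g x = 0} \<inter> I) = {m} \<and> Lz g I = ereal m)" using Lz_S_aux by blast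
qed auto

definition cc :: "(real \<Rightarrow> real) \<Rightarrow> nat \<Rightarrow> real \<Rightarrow> real" where
  "cc lam k v = (\<Sum>j<k. lam (real j + v))"

definition tent :: "real \<Rightarrow> real \<Rightarrow> real \<Rightarrow> real" where
  "tent a b y = max 0 (min (y - a) (b - y))"

definition tt :: "(real \<Rightarrow> real) \<Rightarrow> real \<Rightarrow> real \<Rightarrow> nat \<times> int \<Rightarrow> real" where
  "tt lam v y i = tent (cc lam (fst i) v + of_int (snd i)) (cc lam (Suc (fst i)) v + of_int (snd i)) y"

definition hh :: "(real \<Rightarrow> real) \<Rightarrow> real \<Rightarrow> real \<Rightarrow> real" where
  "hh lam v y = (SUP i\<in>UNIV. tt lam v y i)"

definition Phi :: "(real \<Rightarrow> real) \<Rightarrow> real \<times> real \<Rightarrow> real \<Rightarrow> real" where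
  "Phi lam p = (\<lambda>x. hh lam (fst p) (x + snd p))"

lemma tent_nonneg: "0 \<le> tent a b y" by (simp add: tent_def)

lemma tent_le: "tent a b y \<le> max 0 (b - a)"
  by (simp add: tent_def)

lemma tent_pos_iff: "0 < tent a b y \<longleftrightarrow> a < y \<and> y < b"
  by (auto simp: tent_def)

lemma tent_lip: "tent a b y \<le> tent a b z + \<bar>y - z\<bar>"
  by (simp add: tent_def)

lemma tt_bound:
  assumes "\<And>w. 0 \<le> lam w \<and> lam w \<le> K"
  shows "tt lam v y i \<le> K" "0 \<le> tt lam v y i"
proof -
  have "cc lam (Suc (fst i)) v - cc lam (fst i) v = lam (real (fst i) + v)"
    by (simp add: cc_def)
  then show "tt lam v y i \<le> K" using tent_le[of "cc lam (fst i) v + of_int (snd i)"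
      "cc lam (Suc (fst i)) v + of_int (snd i)" y] assms[of "real (fst i) + v"]
    unfolding tt_def by auto
  show "0 \<le> tt lam v y i" by (simp add: tt_def tent_nonneg)
qed

lemma tt_bdd:
  assumes "\<And>w. 0 \<le> lam w \<and> lam w \<le> K"
  shows "bdd_above (range (tt lam v y))"
  using tt_bound[OF assms] by (intro bdd_aboveI[of _ K]) auto

lemma hh_ge:
  assumes "\<And>w. 0 \<le> lam w \<and> lam w \<le> K"
  shows "tt lam v y i \<le> hh lam v y"
  unfolding hh_def by (rule cSUP_upper[OF _ tt_bdd[OF assms]]) auto

lemma hh_nonneg:
  assumes "\<And>w. 0 \<le> lam w \<and> lam w \<le> K"
  shows "0 \<le> hh lam v y"
  using hh_ge[of lam K v y "(0,0)", OF assms] tt_bound(2)[of lam K v y "(0,0)", OF assms] by linarith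

lemma hh_lip:
  assumes "\<And>w. 0 \<le> lam w \<and> lam w \<le> K"
  shows "hh lam v y \<le> hh lam v z + \<bar>y - z\<bar>"
proof -
  have "hh lam v y \<le> hh lam v z + \<bar>y - z\<bar>"
    unfolding hh_def[of lam v y]
  proof (rule cSUP_least)
    fix i :: "nat \<times> int"
    have "tt lam v y i \<le> tt lam v z i + \<bar>y - z\<bar>" unfolding tt_def by (rule tent_lip)
    also have "\<dots> \<le> hh lam v z + \<bar>y - z\<bar>" using hh_ge[OF assms] by simp
    finally show "tt lam v y i \<le> hh lam v z + \<bar>y - z\<bar>" .
  qed auto
  then show ?thesis .
qed

lemma hh_cont:
  assumes "\<And>w. 0 \<le> lam w \<and> lam w \<le> K"
  shows "continuous_on UNIV (hh lam v)"
proof (rule lipschitz_on_continuous_on[of 1])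
  show "1-lipschitz_on UNIV (hh lam v)"
  proof (rule lipschitz_onI)
    fix y z
    have "hh lam v y \<le> hh lam v z + \<bar>y - z\<bar>" "hh lam v z \<le> hh lam v y + \<bar>z - y\<bar>"
      using hh_lip[OF assms] by auto
    then show "dist (hh lam v y) (hh lam v z) \<le> 1 * dist y z"
      by (simp add: dist_real_def abs_minus_commute)
  qed simp
qed

lemma hh_periodic: "hh lam v (y + of_int m) = hh lam v y"
proof -
  have "range (tt lam v (y + of_int m)) = range (tt lam v y)"
  proof (intro set_eqI iffI)
    fix r assume "r \<in> range (tt lam v (y + of_int m))"
    then obtain k n where r: "r = tt lam v (y + of_int m) (k, n)" by auto
    have "r = tt lam v y (k, n - m)" unfolding r tt_def tent_def by (simp add: algebra_simps)
    then show "r \<in> range (tt lam v y)" by auto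
  next
    fix r assume "r \<in> range (tt lam v y)"
    then obtain k n where r: "r = tt lam v y (k, n)" by auto
    have "r = tt lam v (y + of_int m) (k, n + m)" unfolding r tt_def tent_def by (simp add: algebra_simps)
    then show "r \<in> range (tt lam v (y + of_int m))" by blast
  qed
  then show ?thesis unfolding hh_def by simp
qed

lemma hh_pos_iff:
  assumes "\<And>w. 0 \<le> lam w \<and> lam w \<le> K"
  shows "hh lam v y \<noteq> 0 \<longleftrightarrow>
    (\<exists>k n. cc lam k v + of_int n < y \<and> y < cc lam (Suc k) v + of_int n)"
proof
  assume "hh lam v y \<noteq> 0"
  show "\<exists>k n. cc lam k v + of_int n < y \<and> y < cc lam (Suc k) v + of_int n"
  proof (rule ccontr)
    assume N: "\<not> ?thesis"
    have "tt lam v y i = 0" for i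
    proof -
      have "\<not> 0 < tt lam v y i" using N unfolding tt_def tent_pos_iff by (cases i) auto
      then show ?thesis using tt_bound(2)[of lam K v y i, OF assms] by linarith
    qed
    then have "hh lam v y = 0" unfolding hh_def by simp
    then show False using \<open>hh lam v y \<noteq> 0\<close> by simp
  qed
next
  assume "\<exists>k n. cc lam k v + of_int n < y \<and> y < cc lam (Suc k) v + of_int n"
  then obtain k n where "cc lam k v + of_int n < y" "y < cc lam (Suc k) v + of_int n" by auto
  then have "0 < tt lam v y (k, n)" unfolding tt_def tent_pos_iff by simp
  then show "hh lam v y \<noteq> 0" using hh_ge[of lam K v y "(k,n)", OF assms] by linarith
qed

lemma cc_meas[measurable]:
  assumes [measurable]: "lam \<in> borel_measurable borel"
  shows "cc lam k \<in> borel_measurable borel"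
  unfolding cc_def by measurable

lemma hh_meas:
  assumes [measurable]: "lam \<in> borel_measurable borel" and B: "\<And>w. 0 \<le> lam w \<and> lam w \<le> K"
  shows "(\<lambda>p. hh lam (fst p) (x + snd p)) \<in> borel_measurable (lborel \<Otimes>\<^sub>M lborel)"
  unfolding hh_def
proof (rule borel_measurable_cSUP)
  fix i :: "nat \<times> int"
  show "(\<lambda>p. tt lam (fst p) (x + snd p) i) \<in> borel_measurable (lborel \<Otimes>\<^sub>M lborel)"
    unfolding tt_def tent_def by measurable
next
  fix p show "bdd_above ((\<lambda>i. tt lam (fst p) (x + snd p) i) ` UNIV)"
    using tt_bdd[OF B] by simp
qed simp

lemma Phi_meas:
  assumes [measurable]: "lam \<in> borel_measurable borel" and B: "\<And>w. 0 \<le> lam w \<and> lam w \<le> K"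
  shows "Phi lam \<in> (lborel \<Otimes>\<^sub>M lborel) \<rightarrow>\<^sub>M path_space"
  unfolding Phi_def
  by (rule measurable_PiM_single') (auto intro: hh_meas[OF assms(1) B] simp: space_path_space)

lemma Phi_Hc:
  assumes "\<And>w. 0 \<le> lam w \<and> lam w \<le> K"
  shows "Phi lam p \<in> Hc"
proof -
  have "continuous_on UNIV (\<lambda>x. hh lam (fst p) (x + snd p))"
    by (rule continuous_on_compose2[OF hh_cont[OF assms]]) (auto intro!: continuous_intros)
  moreover have "period1 (\<lambda>x. hh lam (fst p) (x + snd p))"
    unfolding period1_def
  proof
    fix x
    show "hh lam (fst p) (x + 1 + snd p) = hh lam (fst p) (x + snd p)"
      using hh_periodic[of lam "fst p" "x + snd p" 1] by (simp add: ac_simps)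
  qed
  ultimately show ?thesis unfolding Hc_def Phi_def by auto
qed

lemma Phi_shift: "shift c (Phi lam (v, u)) = Phi lam (v, frac (u + c))"
proof
  fix x
  have "hh lam v (x + frac (u + c)) = hh lam v (x + (u + c) + of_int (- \<lfloor>u + c\<rfloor>))"
    by (simp add: frac_def algebra_simps)
  also have "\<dots> = hh lam v (x + (u + c))" by (rule hh_periodic)
  finally show "shift c (Phi lam (v, u)) x = Phi lam (v, frac (u + c)) x"
    by (simp add: shift_def Phi_def algebra_simps)
qed

lemma cc_mono:
  assumes "\<And>w. 0 \<le> lam w" "k \<le> k'"
  shows "cc lam k v \<le> cc lam k' v"
  unfolding cc_def by (rule sum_mono2) (use assms in auto)

lemma cc_nonneg: "(\<And>w. 0 \<le> lam w) \<Longrightarrow> 0 \<le> cc lam k v"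
  unfolding cc_def by (intro sum_nonneg) auto

lemma cc_Suc: "cc lam (Suc k) v = cc lam k v + lam (real k + v)"
  unfolding cc_def by simp

lemma no_gap_at_endpoint:
  assumes B: "\<And>w. 0 \<le> lam w \<and> lam w \<le> T" and C: "\<And>k. cc lam k v \<le> 1"
    and pos: "0 < cc lam k v"
  shows "\<not> (cc lam j v + of_int n < cc lam k v \<and> cc lam k v < cc lam (Suc j) v + of_int n)"
proof
  assume H: "cc lam j v + of_int n < cc lam k v \<and> cc lam k v < cc lam (Suc j) v + of_int n"
  have nn: "\<And>w. 0 \<le> lam w" using B by auto
  consider "n = 0" | "n \<ge> 1" | "n \<le> -1" by linarith
  then show False
  proof cases
    case 1
    show False
    proof (cases "k \<le> j")
      case True
      then have "cc lam k v \<le> cc lam j v" by (rule cc_mono[OF nn])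
      then show False using H 1 by simp
    next
      case False
      then have "Suc j \<le> k" by simp
      then have "cc lam (Suc j) v \<le> cc lam k v" by (rule cc_mono[OF nn])
      then show False using H 1 by simp
    qed
  next
    case 2
    have "0 \<le> cc lam j v" by (rule cc_nonneg[OF nn])
    moreover have "(1::real) \<le> of_int n" using 2 by simp
    ultimately show False using H C[of k] by linarith
  next
    case 3
    have "(of_int n :: real) \<le> -1" using 3 by simp
    then show False using H C[of "Suc j"] pos by linarith
  qed
qed

lemma Lz_in_gap:
  assumes B: "\<And>w. 0 \<le> lam w \<and> lam w \<le> T" and C: "\<And>k. cc lam k v \<le> 1"
    and u: "0 \<le> u" and gap: "cc lam k v < u" "u < cc lam (Suc k) v"
  shows "Lz (Phi lam (v, u)) {0..T} = ereal (cc lam (Suc k) v - u)"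
proof (rule Lz_eq)
  have "cc lam (Suc k) v - cc lam k v \<le> T" using B[of "real k + v"] by (simp add: cc_Suc)
  then show "cc lam (Suc k) v - u \<in> {0..T}" using gap by auto
  have pos: "0 < cc lam (Suc k) v" using gap u by linarith
  have "\<not> hh lam v (cc lam (Suc k) v) \<noteq> 0"
    unfolding hh_pos_iff[of lam T v, OF B] using no_gap_at_endpoint[OF B C pos] by blast
  then show "Phi lam (v, u) (cc lam (Suc k) v - u) = 0" by (simp add: Phi_def)
next
  fix y assume y: "y \<in> {0..T}" "Phi lam (v, u) y = 0"
  show "cc lam (Suc k) v - u \<le> y"
  proof (rule ccontr)
    assume "\<not> ?thesis"
    then have "cc lam k v + of_int 0 < y + u \<and> y + u < cc lam (Suc k) v + of_int 0"
      using y gap by auto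
    then have "hh lam v (y + u) \<noteq> 0"
      unfolding hh_pos_iff[of lam T v, OF B] by blast
    then show False using y(2) by (simp add: Phi_def)
  qed
qed

lemma Lz_not_in_gap:
  assumes B: "\<And>w. 0 \<le> lam w \<and> lam w \<le> T" and C: "\<And>k. cc lam k v \<le> 1" and T: "0 \<le> T"
    and u: "0 \<le> u" "u < 1" and ng: "\<And>k. \<not> (cc lam k v < u \<and> u < cc lam (Suc k) v)"
  shows "Lz (Phi lam (v, u)) {0..T} = ereal 0"
proof (rule Lz_eq)
  show "0 \<in> {0..T}" using T by simp
  have nn: "\<And>w. 0 \<le> lam w" using B by auto
  have "\<not> (cc lam j v + of_int n < u \<and> u < cc lam (Suc j) v + of_int n)" for j n
  proof
    assume H: "cc lam j v + of_int n < u \<and> u < cc lam (Suc j) v + of_int n"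
    consider "n = 0" | "n \<ge> 1" | "n \<le> -1" by linarith
    then show False
    proof cases
      case 1 then show False using H ng[of j] by simp
    next
      case 2
      have "0 \<le> cc lam j v" by (rule cc_nonneg[OF nn])
      moreover have "(1::real) \<le> of_int n" using 2 by simp
      ultimately show False using H u by linarith
    next
      case 3
      have "(of_int n :: real) \<le> -1" using 3 by simp
      then show False using H C[of "Suc j"] u by linarith
    qed
  qed
  then have "\<not> hh lam v u \<noteq> 0"
    unfolding hh_pos_iff[of lam T v, OF B] by blast
  then show "Phi lam (v, u) 0 = 0" by (simp add: Phi_def)
qed auto

lemma nn_shift:
  fixes f :: "real \<Rightarrow> ennreal"
  assumes "f \<in> borel_measurable borel"
  shows "(\<integral>\<^sup>+x. f (x + t) \<partial>lborel) = (\<integral>\<^sup>+x. f x \<partial>lborel)"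
  using nn_integral_real_affine[OF assms, of 1 t] by (simp add: add.commute)

lemma frac_measurable[measurable]: "frac \<in> borel_measurable (borel :: real measure)"
  unfolding frac_def by measurable

lemma rot1:
  fixes \<phi> :: "real \<Rightarrow> ennreal"
  assumes [measurable]: "\<phi> \<in> borel_measurable borel"
  shows "(\<integral>\<^sup>+u. indicator {0..<1} u * \<phi> (frac (u + c)) \<partial>lborel) = (\<integral>\<^sup>+u. indicator {0..<1} u * \<phi> u \<partial>lborel)"
proof -
  define d where "d = frac c"
  have d: "0 \<le> d" "d < 1" unfolding d_def by (auto simp: frac_lt_1)
  have fr: "frac (u + c) = frac (u + d)" for u
  proof -
    have e: "u + c = (u + d) + of_int \<lfloor>c\<rfloor>" unfolding d_def frac_def by simp
    show ?thesis by (subst e) (rule frac_add_of_int_right)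
  qed
  have pw: "indicator {0..<1} u * \<phi> (frac (u + c)) =
      indicator {0..<1-d} u * \<phi> (u + d) + indicator {1-d..<1} u * \<phi> (u + d - 1)" for u
  proof (cases "u \<in> {0..<1-d}")
    case True
    then have "frac (u + d) = u + d" using d by (intro frac_eq[THEN iffD2]) auto
    then show ?thesis using True d by (simp add: fr indicator_def)
  next
    case False
    show ?thesis
    proof (cases "u \<in> {1-d..<1}")
      case True
      have "\<lfloor>u + d\<rfloor> = 1" using True d by (intro floor_unique) auto
      then have "frac (u + d) = u + d - 1" by (simp add: frac_def)
      then show ?thesis using True False d by (simp add: fr indicator_def)
    next
      case F2: False
      have "u \<notin> {0..<1}" using False F2 by auto
      then show ?thesis using False F2 by (auto simp: indicator_def)
    qed
  qed
  have "(\<integral>\<^sup>+u. indicator {0..<1} u * \<phi> (frac (u + c)) \<partial>lborel) =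
      (\<integral>\<^sup>+u. indicator {0..<1-d} u * \<phi> (u + d) \<partial>lborel) + (\<integral>\<^sup>+u. indicator {1-d..<1} u * \<phi> (u + d - 1) \<partial>lborel)"
    unfolding pw by (rule nn_integral_add) measurable
  also have "(\<integral>\<^sup>+u. indicator {0..<1-d} u * \<phi> (u + d) \<partial>lborel) = (\<integral>\<^sup>+w. indicator {d..<1} w * \<phi> w \<partial>lborel)"
  proof -
    have "(\<integral>\<^sup>+u. indicator {0..<1-d} u * \<phi> (u + d) \<partial>lborel) =
        (\<integral>\<^sup>+u. (\<lambda>w. indicator {0..<1-d} (w - d) * \<phi> w) (u + d) \<partial>lborel)" by simp
    also have "\<dots> = (\<integral>\<^sup>+w. indicator {0..<1-d} (w - d) * \<phi> w \<partial>lborel)"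
      by (rule nn_shift) measurable
    also have "\<dots> = (\<integral>\<^sup>+w. indicator {d..<1} w * \<phi> w \<partial>lborel)"
      by (intro nn_integral_cong) (auto simp: indicator_def)
    finally show ?thesis .
  qed
  also have "(\<integral>\<^sup>+u. indicator {1-d..<1} u * \<phi> (u + d - 1) \<partial>lborel) = (\<integral>\<^sup>+w. indicator {0..<d} w * \<phi> w \<partial>lborel)"
  proof -
    have "(\<integral>\<^sup>+u. indicator {1-d..<1} u * \<phi> (u + d - 1) \<partial>lborel) =
        (\<integral>\<^sup>+u. (\<lambda>w. indicator {1-d..<1} (w - (d - 1)) * \<phi> w) (u + (d - 1)) \<partial>lborel)"
      by (simp add: algebra_simps)
    also have "\<dots> = (\<integral>\<^sup>+w. indicator {1-d..<1} (w - (d - 1)) * \<phi> w \<partial>lborel)"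
      by (rule nn_shift) measurable
    also have "\<dots> = (\<integral>\<^sup>+w. indicator {0..<d} w * \<phi> w \<partial>lborel)"
      by (intro nn_integral_cong) (auto simp: indicator_def)
    finally show ?thesis .
  qed
  also have "(\<integral>\<^sup>+w. indicator {d..<1} w * \<phi> w \<partial>lborel) + (\<integral>\<^sup>+w. indicator {0..<d} w * \<phi> w \<partial>lborel) =
      (\<integral>\<^sup>+w. indicator {d..<1} w * \<phi> w + indicator {0..<d} w * \<phi> w \<partial>lborel)"
    by (rule nn_integral_add[symmetric]) measurable
  also have "\<dots> = (\<integral>\<^sup>+w. indicator {0..<1} w * \<phi> w \<partial>lborel)"
    using d by (intro nn_integral_cong) (auto simp: indicator_def)
  finally show ?thesis .
qed

definition Sq :: "(real \<times> real) set" where "Sq = {0..<1} \<times> {0..<1}"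
definition Om :: "(real \<times> real) measure" where "Om = uniform_measure (lborel \<Otimes>\<^sub>M lborel) Sq"
definition rot :: "real \<Rightarrow> real \<times> real \<Rightarrow> real \<times> real" where "rot c p = (fst p, frac (snd p + c))"

lemma Sq_sets[measurable]: "Sq \<in> sets (lborel \<Otimes>\<^sub>M lborel)"
  unfolding Sq_def by (intro pair_measureI) auto

lemma Sq_sets'[measurable]: "Sq \<in> sets (borel \<Otimes>\<^sub>M borel)"
  using Sq_sets by simp

lemma Sq_measure: "emeasure (lborel \<Otimes>\<^sub>M lborel) Sq = 1"
  unfolding Sq_def by (subst lborel.emeasure_pair_measure_Times) auto

lemma prob_Om: "prob_space Om"
  unfolding Om_def by (rule prob_space_uniform_measure) (simp_all add: Sq_measure)

lemma sets_Om[simp, measurable_cong]: "sets Om = sets (lborel \<Otimes>\<^sub>M lborel)"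
  unfolding Om_def by simp

lemma space_Om[simp]: "space Om = UNIV"
  unfolding Om_def by (simp add: space_pair_measure)

lemma emeasure_Om: "B \<in> sets (lborel \<Otimes>\<^sub>M lborel) \<Longrightarrow> emeasure Om B = emeasure (lborel \<Otimes>\<^sub>M lborel) (Sq \<inter> B)"
  unfolding Om_def by (subst emeasure_uniform_measure) (simp_all add: Sq_sets' Sq_measure divide_ennreal_def)

lemma rot_meas[measurable]: "rot c \<in> (lborel \<Otimes>\<^sub>M lborel) \<rightarrow>\<^sub>M (lborel \<Otimes>\<^sub>M lborel)"
  unfolding rot_def by measurable

lemma Om_rot: "distr Om (lborel \<Otimes>\<^sub>M lborel) (rot c) = Om"
proof (rule measure_eqI)
  show "sets (distr Om (lborel \<Otimes>\<^sub>M lborel) (rot c)) = sets Om" by simp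
next
  fix A assume "A \<in> sets (distr Om (lborel \<Otimes>\<^sub>M lborel) (rot c))"
  then have A[measurable]: "A \<in> sets (lborel \<Otimes>\<^sub>M lborel)" by simp
  have m1: "rot c -` A \<in> sets (lborel \<Otimes>\<^sub>M lborel)"
    using measurable_sets[OF rot_meas A] by (simp add: space_pair_measure)
  have "emeasure (distr Om (lborel \<Otimes>\<^sub>M lborel) (rot c)) A = emeasure Om (rot c -` A)"
    using A m1 by (subst emeasure_distr) auto
  also have "\<dots> = emeasure (lborel \<Otimes>\<^sub>M lborel) (Sq \<inter> rot c -` A)"
    by (rule emeasure_Om[OF m1])
  also have "\<dots> = (\<integral>\<^sup>+v. \<integral>\<^sup>+u. indicator (Sq \<inter> rot c -` A) (v, u) \<partial>lborel \<partial>lborel)"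
    by (rule lborel.emeasure_pair_measure) (use m1 Sq_sets' in auto)
  also have "\<dots> = (\<integral>\<^sup>+v. \<integral>\<^sup>+u. indicator (Sq \<inter> A) (v, u) \<partial>lborel \<partial>lborel)"
  proof (rule nn_integral_cong)
    fix v :: real
    have mA: "(\<lambda>u. indicator A (v, u) :: ennreal) \<in> borel_measurable borel" by measurable
    show "(\<integral>\<^sup>+u. indicator (Sq \<inter> rot c -` A) (v, u) \<partial>lborel) = (\<integral>\<^sup>+u. indicator (Sq \<inter> A) (v, u) \<partial>lborel)"
    proof (cases "v \<in> {0..<1}")
      case True
      have "(\<integral>\<^sup>+u. indicator (Sq \<inter> rot c -` A) (v, u) \<partial>lborel) =
          (\<integral>\<^sup>+u. indicator {0..<1} u * indicator A (v, frac (u + c)) \<partial>lborel)"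
        using True by (intro nn_integral_cong) (auto simp: indicator_def Sq_def rot_def)
      also have "\<dots> = (\<integral>\<^sup>+u. indicator {0..<1} u * indicator A (v, u) \<partial>lborel)"
        by (rule rot1[OF mA])
      also have "\<dots> = (\<integral>\<^sup>+u. indicator (Sq \<inter> A) (v, u) \<partial>lborel)"
        using True by (intro nn_integral_cong) (auto simp: indicator_def Sq_def)
      finally show ?thesis .
    next
      case False
      then have "indicator (Sq \<inter> rot c -` A) (v, u) = (0::ennreal)" "indicator (Sq \<inter> A) (v, u) = (0::ennreal)" for u
        by (auto simp: indicator_def Sq_def)
      then show ?thesis by simp
    qed
  qed
  also have "\<dots> = emeasure (lborel \<Otimes>\<^sub>M lborel) (Sq \<inter> A)"
    by (rule lborel.emeasure_pair_measure[symmetric]) (use A Sq_sets' in auto)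
  also have "\<dots> = emeasure Om A" by (rule emeasure_Om[symmetric, OF A])
  finally show "emeasure (distr Om (lborel \<Otimes>\<^sub>M lborel) (rot c)) A = emeasure Om A" .
qed

definition Emb :: "real \<times> real \<Rightarrow> real \<Rightarrow> real" where
  "Emb p = (\<lambda>x. if x = 0 then fst p else snd p)"

definition MM :: "(real \<Rightarrow> real) measure" where
  "MM = distr Om path_space Emb"

definition XX :: "(real \<Rightarrow> real) \<Rightarrow> (real \<Rightarrow> real) \<Rightarrow> real \<Rightarrow> real" where
  "XX lam \<omega> = Phi lam (\<omega> 0, \<omega> 1)"

lemma Emb_meas: "Emb \<in> Om \<rightarrow>\<^sub>M path_space"
proof -
  have "Emb \<in> (lborel \<Otimes>\<^sub>M lborel) \<rightarrow>\<^sub>M path_space"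
    unfolding Emb_def
    by (rule measurable_PiM_single') (auto simp: space_path_space)
  then show ?thesis by (simp add: measurable_cong_sets[OF sets_Om refl])
qed

lemma rot_meas_Om: "rot c \<in> Om \<rightarrow>\<^sub>M (lborel \<Otimes>\<^sub>M lborel)"
  using rot_meas by (simp add: measurable_cong_sets[OF sets_Om refl])

lemma Phi_meas_Om:
  assumes "lam \<in> borel_measurable borel" "\<And>w. 0 \<le> lam w \<and> lam w \<le> K"
  shows "Phi lam \<in> Om \<rightarrow>\<^sub>M path_space"
  using Phi_meas[OF assms] by (simp add: measurable_cong_sets[OF sets_Om refl])

lemma pair01_meas: "(\<lambda>\<omega>::real\<Rightarrow>real. (\<omega> 0, \<omega> 1)) \<in> path_space \<rightarrow>\<^sub>M (lborel \<Otimes>\<^sub>M lborel)"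
proof (rule measurable_Pair)
  show "(\<lambda>\<omega>::real\<Rightarrow>real. \<omega> 0) \<in> path_space \<rightarrow>\<^sub>M lborel"
    unfolding measurable_lborel1 by (rule measurable_component_singleton) simp
  show "(\<lambda>\<omega>::real\<Rightarrow>real. \<omega> 1) \<in> path_space \<rightarrow>\<^sub>M lborel"
    unfolding measurable_lborel1 by (rule measurable_component_singleton) simp
qed

lemma XX_meas:
  assumes "lam \<in> borel_measurable borel" "\<And>w. 0 \<le> lam w \<and> lam w \<le> K"
  shows "XX lam \<in> path_space \<rightarrow>\<^sub>M path_space"
proof -
  have "(\<lambda>\<omega>. Phi lam (\<omega> 0, \<omega> 1)) \<in> path_space \<rightarrow>\<^sub>M path_space"
    using measurable_comp[OF pair01_meas Phi_meas[OF assms]] by (simp add: comp_def)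
  then show ?thesis unfolding XX_def .
qed

lemma XX_Emb: "XX lam (Emb p) = Phi lam p"
  by (simp add: XX_def Emb_def)

lemma shift_meas: "(\<lambda>g. shift c g) \<in> path_space \<rightarrow>\<^sub>M path_space"
  unfolding shift_def
  by (rule measurable_PiM_single') (auto simp: space_path_space)

lemma space_MM[simp]: "space MM = UNIV"
  by (simp add: MM_def space_path_space)

lemma sets_MM[simp]: "sets MM = sets path_space"
  by (simp add: MM_def)

lemma stationary_MM:
  assumes m: "lam \<in> borel_measurable borel" and B: "\<And>w. 0 \<le> lam w \<and> lam w \<le> K"
  shows "periodic_stationary Hc MM (XX lam)"
  unfolding periodic_stationary_def
proof (intro conjI ballI allI)
  show "prob_space MM" unfolding MM_def
    by (rule prob_space.prob_space_distr[OF prob_Om Emb_meas])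
  show "XX lam \<in> MM \<rightarrow>\<^sub>M path_space"
    using XX_meas[OF assms] by (simp add: measurable_cong_sets[OF sets_MM refl])
  fix \<omega> assume "\<omega> \<in> space MM"
  have H: "XX lam \<omega> \<in> Hc" unfolding XX_def by (rule Phi_Hc[OF B])
  then show "XX lam \<omega> \<in> Hc" .
  show "continuous_on UNIV (XX lam \<omega>)" using H by (simp add: Hc_def)
  show "period1 (XX lam \<omega>)" using H by (simp add: Hc_def)
next
  fix c
  have XXm: "XX lam \<in> path_space \<rightarrow>\<^sub>M path_space" by (rule XX_meas[OF assms])
  have SXm: "(\<lambda>\<omega>. shift c (XX lam \<omega>)) \<in> path_space \<rightarrow>\<^sub>M path_space"
    using measurable_comp[OF XXm shift_meas] by (simp add: comp_def)
  have "distr MM path_space (\<lambda>\<omega>. shift c (XX lam \<omega>)) = distr Om path_space ((\<lambda>\<omega>. shift c (XX lam \<omega>)) \<circ> Emb)"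
    unfolding MM_def by (rule distr_distr[OF SXm Emb_meas])
  also have "(\<lambda>\<omega>. shift c (XX lam \<omega>)) \<circ> Emb = Phi lam \<circ> rot c"
  proof
    fix p :: "real \<times> real"
    obtain v u where p: "p = (v, u)" by (cases p)
    show "((\<lambda>\<omega>. shift c (XX lam \<omega>)) \<circ> Emb) p = (Phi lam \<circ> rot c) p"
      by (simp add: p XX_Emb Phi_shift rot_def)
  qed
  also have "distr Om path_space (Phi lam \<circ> rot c) = distr (distr Om (lborel \<Otimes>\<^sub>M lborel) (rot c)) path_space (Phi lam)"
    by (rule distr_distr[symmetric, OF Phi_meas[OF assms] rot_meas_Om])
  also have "\<dots> = distr Om path_space (Phi lam)" by (simp add: Om_rot)
  also have "\<dots> = distr Om path_space (XX lam \<circ> Emb)"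
    by (intro arg_cong[where f="distr Om path_space"]) (auto simp: XX_Emb)
  also have "\<dots> = distr MM path_space (XX lam)"
    unfolding MM_def by (rule distr_distr[symmetric, OF XXm Emb_meas])
  finally show "distr MM path_space (\<lambda>\<omega>. shift c (XX lam \<omega>)) = distr MM path_space (XX lam)" .
qed

lemma ereal_image_borel:
  assumes "A \<in> sets (borel :: real measure)"
  shows "ereal ` A \<in> sets (borel :: ereal measure)"
proof -
  note [measurable] = assms
  have "{x \<in> space borel. real_of_ereal x \<in> A} \<in> sets (borel :: ereal measure)"
    by measurable
  moreover have "{\<infinity>, -\<infinity>} \<in> sets (borel :: ereal measure)" by simp
  ultimately have "{x \<in> space borel. real_of_ereal x \<in> A} - {\<infinity>, -\<infinity>} \<in> sets (borel :: ereal measure)"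
    by (rule sets.Diff)
  moreover have "{x \<in> space borel. real_of_ereal x \<in> A} - {\<infinity>, -\<infinity>} = ereal ` A"
  proof (intro set_eqI iffI)
    fix x assume "x \<in> {x \<in> space borel. real_of_ereal x \<in> A} - {\<infinity>, -\<infinity>}"
    then show "x \<in> ereal ` A" by (cases x) auto
  qed auto
  ultimately show ?thesis by metis
qed

lemma sum_indicator_layers:
  fixes w :: real and c :: ennreal
  shows "(\<Sum>k. indicator {real k..<real k + 1} w * c) = indicator {0..} w * c"
proof (cases "0 \<le> w")
  case True
  define n where "n = nat \<lfloor>w\<rfloor>"
  have wn: "w \<in> {real n..<real n + 1}" using True unfolding n_def by auto
  have "(\<Sum>k. indicator {real k..<real k + 1} w * c) = (\<Sum>k\<in>{n}. indicator {real k..<real k + 1} w * c)"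
  proof (rule suminf_finite)
    fix k assume "k \<notin> {n}"
    then have "k \<noteq> n" by simp
    have "w \<notin> {real k..<real k + 1}"
    proof
      assume "w \<in> {real k..<real k + 1}"
      then have "\<lfloor>w\<rfloor> = int k" by (intro floor_unique) auto
      then show False using \<open>k \<noteq> n\<close> unfolding n_def by simp
    qed
    then show "indicator {real k..<real k + 1} w * c = 0" by simp
  qed simp
  also have "\<dots> = indicator {real n..<real n + 1} w * c"
    by (metis add.right_neutral empty_iff finite.emptyI sum.empty sum.insert)
  also have "\<dots> = c" using wn by simp
  finally show ?thesis using True by simp
next
  case False
  then have "\<And>k. w \<notin> {real k..<real k + 1}" by auto
  then show ?thesis using False by simp
qed

lemma layer_sum:
  assumes a: "0 \<le> a"
  shows "(\<Sum>k. \<integral>\<^sup>+v. indicator {0..<1} v * (of_bool (real k + v < a) :: ennreal) \<partial>lborel) = ennreal a"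
proof -
  have sh: "(\<integral>\<^sup>+v. indicator {0..<1} v * (of_bool (real k + v < a) :: ennreal) \<partial>lborel) =
      (\<integral>\<^sup>+w. indicator {real k..<real k + 1} w * of_bool (w < a) \<partial>lborel)" for k
  proof -
    have "(\<integral>\<^sup>+v. indicator {0..<1} v * (of_bool (real k + v < a) :: ennreal) \<partial>lborel) =
        (\<integral>\<^sup>+v. (\<lambda>w. indicator {real k..<real k + 1} w * (of_bool (w < a) :: ennreal)) (v + real k) \<partial>lborel)"
      by (intro nn_integral_cong) (auto simp: indicator_def add.commute)
    also have "\<dots> = (\<integral>\<^sup>+w. indicator {real k..<real k + 1} w * of_bool (w < a) \<partial>lborel)"
      by (rule nn_shift) measurable
    finally show ?thesis .
  qed
  have "(\<Sum>k. \<integral>\<^sup>+v. indicator {0..<1} v * (of_bool (real k + v < a) :: ennreal) \<partial>lborel) =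
      (\<Sum>k. \<integral>\<^sup>+w. indicator {real k..<real k + 1} w * (of_bool (w < a) :: ennreal) \<partial>lborel)"
    by (simp add: sh)
  also have "\<dots> = (\<integral>\<^sup>+w. (\<Sum>k. indicator {real k..<real k + 1} w * (of_bool (w < a) :: ennreal)) \<partial>lborel)"
    by (rule nn_integral_suminf[symmetric]) measurable
  also have "\<dots> = (\<integral>\<^sup>+w. indicator {0..<a} w \<partial>lborel)"
  proof (rule nn_integral_cong)
    fix w :: real
    show "(\<Sum>k. indicator {real k..<real k + 1} w * (of_bool (w < a) :: ennreal)) = indicator {0..<a} w"
      unfolding sum_indicator_layers by (auto simp: indicator_def)
  qed
  also have "\<dots> = ennreal a" using a by simp
  finally show ?thesis .
qed

lemma gap_unique:
  assumes "\<And>w. 0 \<le> lam w"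
    and "cc lam j v < u" "u < cc lam (Suc j) v" "cc lam k v < u" "u < cc lam (Suc k) v"
  shows "j = k"
proof (rule ccontr)
  assume "j \<noteq> k"
  then consider "Suc j \<le> k" | "Suc k \<le> j" by linarith
  then show False
  proof cases
    case 1 then have "cc lam (Suc j) v \<le> cc lam k v" by (rule cc_mono[OF assms(1)])
    then show False using assms by simp
  next
    case 2 then have "cc lam (Suc k) v \<le> cc lam j v" by (rule cc_mono[OF assms(1)])
    then show False using assms by simp
  qed
qed

lemma LzPhi_meas:
  assumes m: "lam \<in> borel_measurable borel" and B: "\<And>w. 0 \<le> lam w \<and> lam w \<le> K"
  shows "(\<lambda>p. Lz (Phi lam p) {0..T}) \<in> borel_measurable (lborel \<Otimes>\<^sub>M lborel)"
proof -
  have "Phi lam \<in> (lborel \<Otimes>\<^sub>M lborel) \<rightarrow>\<^sub>M restrict_space path_space Hc"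
    by (rule measurable_restrict_space2) (use Phi_Hc[OF B] Phi_meas[OF m B] in auto)
  from measurable_comp[OF this Lz_meas] show ?thesis by (simp add: comp_def)
qed

lemma Q_sets:
  assumes m: "lam \<in> borel_measurable borel" and B: "\<And>w. 0 \<le> lam w \<and> lam w \<le> K"
    and A: "A \<in> sets borel"
  shows "{p. Lz (Phi lam p) {0..T} \<in> ereal ` A} \<in> sets (lborel \<Otimes>\<^sub>M lborel)"
  using measurable_sets[OF LzPhi_meas[OF m B] ereal_image_borel[OF A]]
  by (simp add: space_pair_measure vimage_def)

lemma suminf_single:
  fixes f :: "nat \<Rightarrow> ennreal"
  assumes "\<And>j. j \<noteq> k \<Longrightarrow> f j = 0"
  shows "(\<Sum>j. f j) = f k"
proof -
  have "(\<Sum>j. f j) = (\<Sum>j\<in>{k}. f j)" by (rule suminf_finite) (use assms in auto)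
  also have "\<dots> = f k" by simp
  finally show ?thesis .
qed

lemma inner_pointwise:
  assumes B: "\<And>w. 0 \<le> lam w \<and> lam w \<le> T" and C: "\<And>k. cc lam k v \<le> 1" and T: "0 < T"
    and v: "v \<in> {0..<1}" and A: "A \<subseteq> {0<..<T}"
  shows "indicator (Sq \<inter> {p. Lz (Phi lam p) {0..T} \<in> ereal ` A}) (v, u) =
    (\<Sum>k. indicator {cc lam k v<..<cc lam (Suc k) v} u * (indicator A (cc lam (Suc k) v - u) :: ennreal))"
proof -
  have nn: "\<And>w. 0 \<le> lam w" using B by auto
  show ?thesis
  proof (cases "\<exists>k. cc lam k v < u \<and> u < cc lam (Suc k) v")
    case True
    then obtain k where k: "cc lam k v < u" "u < cc lam (Suc k) v" by auto
    have "0 \<le> cc lam k v" by (rule cc_nonneg) (rule nn)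
    then have u0: "0 < u" using k by linarith
    have u1: "u < 1" using k C[of "Suc k"] by linarith
    have "(\<Sum>j. indicator {cc lam j v<..<cc lam (Suc j) v} u * (indicator A (cc lam (Suc j) v - u) :: ennreal)) =
        indicator {cc lam k v<..<cc lam (Suc k) v} u * indicator A (cc lam (Suc k) v - u)"
    proof (rule suminf_single)
      fix j assume "j \<noteq> k"
      then have "u \<notin> {cc lam j v<..<cc lam (Suc j) v}" using gap_unique[OF nn _ _ k] by auto
      then show "indicator {cc lam j v<..<cc lam (Suc j) v} u * (indicator A (cc lam (Suc j) v - u) :: ennreal) = 0"
        by simp
    qed
    also have "\<dots> = indicator A (cc lam (Suc k) v - u)" using k by simp
    also have "\<dots> = indicator (Sq \<inter> {p. Lz (Phi lam p) {0..T} \<in> ereal ` A}) (v, u)"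
    proof -
      have L: "Lz (Phi lam (v, u)) {0..T} = ereal (cc lam (Suc k) v - u)"
        by (rule Lz_in_gap[OF B C]) (use u0 k in auto)
      have "(v, u) \<in> Sq" using v u0 u1 by (auto simp: Sq_def)
      then show ?thesis using L by (auto simp: indicator_def)
    qed
    finally show ?thesis by simp
  next
    case False
    have "(\<Sum>j. indicator {cc lam j v<..<cc lam (Suc j) v} u * (indicator A (cc lam (Suc j) v - u) :: ennreal)) = 0"
      using False by simp
    moreover have "indicator (Sq \<inter> {p. Lz (Phi lam p) {0..T} \<in> ereal ` A}) (v, u) = (0::ennreal)"
    proof (cases "u \<in> {0..<1}")
      case True
      have "Lz (Phi lam (v, u)) {0..T} = ereal 0"
        by (rule Lz_not_in_gap[OF B C]) (use T True False in auto)
      moreover have "0 \<notin> A" using A by auto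
      ultimately show ?thesis by (auto simp: indicator_def)
    next
      case False
      then show ?thesis by (auto simp: indicator_def Sq_def)
    qed
    ultimately show ?thesis by simp
  qed
qed

lemma reflect_term:
  assumes nn: "\<And>w. 0 \<le> lam w" and A: "A \<in> sets borel" "A \<subseteq> {0<..<T}"
  shows "(\<integral>\<^sup>+u. indicator {cc lam k v<..<cc lam (Suc k) v} u * (indicator A (cc lam (Suc k) v - u) :: ennreal) \<partial>lborel) =
    (\<integral>\<^sup>+t. indicator A t * of_bool (t < lam (real k + v)) \<partial>lborel)"
proof -
  note [measurable] = A(1)
  let ?a = "cc lam k v" and ?b = "cc lam (Suc k) v"
  have "(\<integral>\<^sup>+u. indicator {?a<..<?b} u * (indicator A (?b - u) :: ennreal) \<partial>lborel) =
      ennreal \<bar>-1\<bar> * (\<integral>\<^sup>+x. indicator {?a<..<?b} (?b + (-1) * x) * (indicator A (?b - (?b + (-1) * x)) :: ennreal) \<partial>lborel)"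
    by (rule nn_integral_real_affine) measurable
  also have "\<dots> = (\<integral>\<^sup>+t. indicator A t * of_bool (t < lam (real k + v)) \<partial>lborel)"
  proof -
    have "?b - ?a = lam (real k + v)" by (simp add: cc_Suc)
    then have "indicator {?a<..<?b} (?b + (-1) * x) * (indicator A (?b - (?b + (-1) * x)) :: ennreal) =
        indicator A x * of_bool (x < lam (real k + v))" for x
      using A(2) by (auto simp: indicator_def)
    then show ?thesis by simp
  qed
  finally show ?thesis .
qed

lemma emeasure_Q:
  assumes m: "lam \<in> borel_measurable borel" and B: "\<And>w. 0 \<le> lam w \<and> lam w \<le> T"
    and C: "\<And>v k. v \<in> {0..<1} \<Longrightarrow> cc lam k v \<le> 1" and T: "0 < T"
    and fam[measurable]: "fa \<in> borel_measurable borel" and fa_nn: "\<And>t. t \<in> {0<..<T} \<Longrightarrow> 0 \<le> fa t"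
    and R: "\<And>t w. t \<in> {0<..<T} \<Longrightarrow> 0 \<le> w \<Longrightarrow> (t < lam w \<longleftrightarrow> w < fa t)"
    and A[measurable]: "A \<in> sets borel" and AT: "A \<subseteq> {0<..<T}"
  shows "emeasure Om {p. Lz (Phi lam p) {0..T} \<in> ereal ` A} = (\<integral>\<^sup>+t. ennreal (fa t) * indicator A t \<partial>lborel)"
proof -
  define Q where "Q = {p. Lz (Phi lam p) {0..T} \<in> ereal ` A}"
  have Qs: "Q \<in> sets (lborel \<Otimes>\<^sub>M lborel)" unfolding Q_def by (rule Q_sets[OF m B A])
  have SQs: "Sq \<inter> Q \<in> sets (lborel \<Otimes>\<^sub>M lborel)" using Qs Sq_sets by auto
  have nn: "\<And>w. 0 \<le> lam w" using B by auto
  define G where "G k v = (\<integral>\<^sup>+t. indicator A t * (of_bool (real k + v < fa t) :: ennreal) \<partial>lborel)" for k :: nat and v :: real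
  have Gm: "(\<lambda>v. G k v) \<in> borel_measurable lborel" for k
    unfolding G_def by (rule lborel.borel_measurable_nn_integral) measurable
  have "emeasure Om Q = emeasure (lborel \<Otimes>\<^sub>M lborel) (Sq \<inter> Q)" by (rule emeasure_Om[OF Qs])
  also have "\<dots> = (\<integral>\<^sup>+v. \<integral>\<^sup>+u. indicator (Sq \<inter> Q) (v, u) \<partial>lborel \<partial>lborel)"
    by (rule lborel.emeasure_pair_measure[OF SQs])
  also have "\<dots> = (\<integral>\<^sup>+v. indicator {0..<1} v * (\<Sum>k. G k v) \<partial>lborel)"
  proof (rule nn_integral_cong)
    fix v :: real
    show "(\<integral>\<^sup>+u. indicator (Sq \<inter> Q) (v, u) \<partial>lborel) = indicator {0..<1} v * (\<Sum>k. G k v)"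
    proof (cases "v \<in> {0..<1}")
      case True
      have Cv: "\<And>k. cc lam k v \<le> 1" using C[OF True] .
      have "(\<integral>\<^sup>+u. indicator (Sq \<inter> Q) (v, u) \<partial>lborel) =
          (\<integral>\<^sup>+u. (\<Sum>k. indicator {cc lam k v<..<cc lam (Suc k) v} u * (indicator A (cc lam (Suc k) v - u) :: ennreal)) \<partial>lborel)"
        unfolding Q_def by (intro nn_integral_cong inner_pointwise[OF B Cv T True AT])
      also have "\<dots> = (\<Sum>k. \<integral>\<^sup>+u. indicator {cc lam k v<..<cc lam (Suc k) v} u * (indicator A (cc lam (Suc k) v - u) :: ennreal) \<partial>lborel)"
        by (rule nn_integral_suminf) measurable
      also have "\<dots> = (\<Sum>k. \<integral>\<^sup>+t. indicator A t * of_bool (t < lam (real k + v)) \<partial>lborel)"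
        by (simp add: reflect_term[OF nn A AT])
      also have "\<dots> = (\<Sum>k. G k v)"
      proof -
        have "indicator A t * (of_bool (t < lam (real k + v)) :: ennreal) = indicator A t * of_bool (real k + v < fa t)" for k t
        proof (cases "t \<in> A")
          case True
          then have "t \<in> {0<..<T}" using AT by auto
          moreover have "0 \<le> real k + v" using \<open>v \<in> {0..<1}\<close> by auto
          ultimately show ?thesis using R by auto
        qed simp
        then show ?thesis unfolding G_def by simp
      qed
      finally show ?thesis using True by simp
    next
      case False
      then have "indicator (Sq \<inter> Q) (v, u) = (0::ennreal)" for u by (auto simp: Sq_def indicator_def)
      then show ?thesis using False by simp
    qed
  qed
  also have "\<dots> = (\<integral>\<^sup>+v. (\<Sum>k. indicator {0..<1} v * G k v) \<partial>lborel)"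
    by (simp add: ennreal_suminf_cmult)
  also have "\<dots> = (\<Sum>k. \<integral>\<^sup>+v. indicator {0..<1} v * G k v \<partial>lborel)"
    by (rule nn_integral_suminf) (use Gm in measurable)
  also have "\<dots> = (\<Sum>k. \<integral>\<^sup>+t. indicator A t * (\<integral>\<^sup>+v. indicator {0..<1} v * (of_bool (real k + v < fa t) :: ennreal) \<partial>lborel) \<partial>lborel)"
  proof -
    have "(\<integral>\<^sup>+v. indicator {0..<1} v * G k v \<partial>lborel) =
        (\<integral>\<^sup>+t. indicator A t * (\<integral>\<^sup>+v. indicator {0..<1} v * (of_bool (real k + v < fa t) :: ennreal) \<partial>lborel) \<partial>lborel)" for k
    proof -
      have "(\<integral>\<^sup>+v. indicator {0..<1} v * G k v \<partial>lborel) =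
          (\<integral>\<^sup>+v. \<integral>\<^sup>+t. indicator {0..<1} v * (indicator A t * (of_bool (real k + v < fa t) :: ennreal)) \<partial>lborel \<partial>lborel)"
        unfolding G_def by (intro nn_integral_cong nn_integral_cmult[symmetric]) measurable
      also have "\<dots> = (\<integral>\<^sup>+t. \<integral>\<^sup>+v. indicator {0..<1} v * (indicator A t * (of_bool (real k + v < fa t) :: ennreal)) \<partial>lborel \<partial>lborel)"
        by (rule lborel_pair.Fubini'[where f="\<lambda>t v. indicator {0..<1} v * (indicator A t * (of_bool (real k + v < fa t) :: ennreal))"]) measurable
      also have "\<dots> = (\<integral>\<^sup>+t. indicator A t * (\<integral>\<^sup>+v. indicator {0..<1} v * (of_bool (real k + v < fa t) :: ennreal) \<partial>lborel) \<partial>lborel)"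
      proof (rule nn_integral_cong)
        fix t :: real
        have "(\<integral>\<^sup>+v. indicator {0..<1} v * (indicator A t * (of_bool (real k + v < fa t) :: ennreal)) \<partial>lborel) =
            (\<integral>\<^sup>+v. indicator A t * (indicator {0..<1} v * (of_bool (real k + v < fa t) :: ennreal)) \<partial>lborel)"
          by (simp add: ac_simps)
        also have "\<dots> = indicator A t * (\<integral>\<^sup>+v. indicator {0..<1} v * (of_bool (real k + v < fa t) :: ennreal) \<partial>lborel)"
          by (rule nn_integral_cmult) measurable
        finally show "(\<integral>\<^sup>+v. indicator {0..<1} v * (indicator A t * (of_bool (real k + v < fa t) :: ennreal)) \<partial>lborel) =
            indicator A t * (\<integral>\<^sup>+v. indicator {0..<1} v * (of_bool (real k + v < fa t) :: ennreal) \<partial>lborel)" .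
      qed
      finally show ?thesis .
    qed
    then show ?thesis by simp
  qed
  also have "\<dots> = (\<integral>\<^sup>+t. (\<Sum>k. indicator A t * (\<integral>\<^sup>+v. indicator {0..<1} v * (of_bool (real k + v < fa t) :: ennreal) \<partial>lborel)) \<partial>lborel)"
  proof (rule nn_integral_suminf[symmetric])
    fix k
    have "(\<lambda>t. \<integral>\<^sup>+v. indicator {0..<1} v * (of_bool (real k + v < fa t) :: ennreal) \<partial>lborel) \<in> borel_measurable lborel"
      by (rule lborel.borel_measurable_nn_integral) measurable
    then show "(\<lambda>t. indicator A t * (\<integral>\<^sup>+v. indicator {0..<1} v * (of_bool (real k + v < fa t) :: ennreal) \<partial>lborel)) \<in> borel_measurable lborel"
      by measurable
  qed
  also have "\<dots> = (\<integral>\<^sup>+t. ennreal (fa t) * indicator A t \<partial>lborel)"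
  proof (rule nn_integral_cong)
    fix t :: real
    show "(\<Sum>k. indicator A t * (\<integral>\<^sup>+v. indicator {0..<1} v * (of_bool (real k + v < fa t) :: ennreal) \<partial>lborel)) =
        ennreal (fa t) * indicator A t"
    proof (cases "t \<in> A")
      case True
      then have "0 \<le> fa t" using AT fa_nn by auto
      then show ?thesis using True by (simp add: ennreal_suminf_cmult layer_sum)
    qed simp
  qed
  finally show ?thesis unfolding Q_def .
qed

definition lamf :: "real \<Rightarrow> (real \<Rightarrow> real) \<Rightarrow> real \<Rightarrow> real" where
  "lamf T fa w = Sup (insert 0 {t \<in> {0<..<T}. w < fa t})"

lemma lamf_bdd: "0 < (T::real) \<Longrightarrow> bdd_above (insert 0 {t \<in> {0<..<T}. w < (fa t::real)})"
  by (rule bdd_aboveI[of _ T]) auto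

lemma lamf_bounds:
  assumes T: "0 < T"
  shows "0 \<le> lamf T fa w \<and> lamf T fa w \<le> T"
proof
  show "0 \<le> lamf T fa w" unfolding lamf_def by (rule cSup_upper[OF _ lamf_bdd[OF T]]) simp
  show "lamf T fa w \<le> T" unfolding lamf_def by (rule cSup_least) (use T in auto)
qed

lemma lamf_antimono:
  assumes T: "0 < T" and "w1 \<le> w2"
  shows "lamf T fa w2 \<le> lamf T fa w1"
  unfolding lamf_def by (rule cSup_subset_mono[OF _ lamf_bdd[OF T]]) (use assms in auto)

lemma lamf_meas:
  assumes T: "0 < T"
  shows "lamf T fa \<in> borel_measurable borel"
proof -
  have "mono (\<lambda>w. - lamf T fa w)" by (rule monoI) (use lamf_antimono[OF T] in auto)
  then have "(\<lambda>w. - lamf T fa w) \<in> borel_measurable borel" by (rule borel_measurable_mono)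
  then have "(\<lambda>w. - (- lamf T fa w)) \<in> borel_measurable borel" by measurable
  then show ?thesis by simp
qed

lemma lamf_char:
  assumes T: "0 < T" and t: "t \<in> {0<..<T}"
    and rc: "continuous (at_right t) fa" and ni: "nonincr_on fa 0 T"
  shows "t < lamf T fa w \<longleftrightarrow> w < fa t"
proof
  assume "t < lamf T fa w"
  then obtain s where s: "s \<in> insert 0 {t \<in> {0<..<T}. w < fa t}" "t < s"
    unfolding lamf_def using less_cSup_iff[OF _ lamf_bdd[OF T]] by blast
  then have s2: "s \<in> {0<..<T}" "w < fa s" using t by auto
  have "fa s \<le> fa t" using ni s2 s t unfolding nonincr_on_def by auto
  then show "w < fa t" using s2 by simp
next
  assume w: "w < fa t"
  have "(fa \<longlongrightarrow> fa t) (at_right t)" using rc by (simp add: continuous_within)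
  then have "eventually (\<lambda>s. w < fa s) (at_right t)" using w by (rule order_tendstoD(1))
  then obtain b where b: "b > t" "\<And>s. s > t \<Longrightarrow> s < b \<Longrightarrow> w < fa s"
    unfolding eventually_at_right_field by blast
  define s where "s = (t + min b T) / 2"
  have s: "t < s" "s < b" "s < T" using b t unfolding s_def by auto
  have "s \<in> insert 0 {t \<in> {0<..<T}. w < fa t}" using s t b(2)[of s] by auto
  then have "s \<le> lamf T fa w" unfolding lamf_def by (rule cSup_upper[OF _ lamf_bdd[OF T]])
  then show "t < lamf T fa w" using s by simp
qed

lemma dominated:
  fixes fa ge fa2 ge2 :: "real \<Rightarrow> real"
  assumes T: "0 < T" and t0: "t0 \<in> {0<..<T}"
    and rf: "continuous (at_right t0) fa" and rg: "continuous (at_right t0) ge"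
    and m[measurable]: "fa2 \<in> borel_measurable borel" "ge2 \<in> borel_measurable borel"
    and eqf: "\<And>t. t \<in> {0<..<T} \<Longrightarrow> fa2 t = fa t" and eqg: "\<And>t. t \<in> {0<..<T} \<Longrightarrow> ge2 t = ge t"
    and gnn: "\<And>t. t \<in> {0<..<T} \<Longrightarrow> 0 \<le> ge t"
    and I: "\<And>A. A \<in> sets borel \<Longrightarrow> A \<subseteq> {0<..<T} \<Longrightarrow>
      (\<integral>\<^sup>+x. ennreal (fa2 x) * indicator A x \<partial>lborel) \<le> (\<integral>\<^sup>+x. ennreal (ge2 x) * indicator A x \<partial>lborel)"
    and fin: "\<And>A. A \<in> sets borel \<Longrightarrow> A \<subseteq> {0<..<T} \<Longrightarrow>
      (\<integral>\<^sup>+x. ennreal (ge2 x) * indicator A x \<partial>lborel) < \<infinity>"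
  shows "fa t0 \<le> ge t0"
proof (rule ccontr)
  assume "\<not> fa t0 \<le> ge t0"
  define e where "e = (fa t0 - ge t0) / 3"
  have e: "0 < e" unfolding e_def using \<open>\<not> fa t0 \<le> ge t0\<close> by simp
  have "(fa \<longlongrightarrow> fa t0) (at_right t0)" using rf by (simp add: continuous_within)
  then have ev1: "eventually (\<lambda>s. fa t0 - e < fa s) (at_right t0)" using e by (intro order_tendstoD(1)) auto
  have "(ge \<longlongrightarrow> ge t0) (at_right t0)" using rg by (simp add: continuous_within)
  then have ev2: "eventually (\<lambda>s. ge s < ge t0 + e) (at_right t0)" using e by (intro order_tendstoD(2)) auto
  obtain b where b: "b > t0" "\<And>s. s > t0 \<Longrightarrow> s < b \<Longrightarrow> fa t0 - e < fa s \<and> ge s < ge t0 + e"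
    using eventually_conj[OF ev1 ev2] unfolding eventually_at_right_field by blast
  define b' where "b' = min b T"
  have b': "t0 < b'" "b' \<le> T" using b t0 unfolding b'_def by auto
  define A where "A = {t0<..<b'}"
  have As[measurable]: "A \<in> sets borel" unfolding A_def by simp
  have AT: "A \<subseteq> {0<..<T}" unfolding A_def using t0 b' by auto
  have pw: "ennreal (ge2 x) * indicator A x + ennreal e * indicator A x \<le> ennreal (fa2 x) * indicator A x" for x
  proof (cases "x \<in> A")
    case True
    then have x: "x \<in> {0<..<T}" "t0 < x" "x < b" using AT unfolding A_def b'_def by auto
    have "fa t0 - e < fa x" "ge x < ge t0 + e" using b(2)[OF x(2,3)] by auto
    moreover have "fa t0 - ge t0 = 3 * e" unfolding e_def by simp
    ultimately have lt: "ge x + e \<le> fa x" by linarith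
    have "ennreal (ge2 x) + ennreal e = ennreal (ge2 x + e)"
      using gnn[OF x(1)] eqg[OF x(1)] e by (simp add: ennreal_plus)
    also have "\<dots> \<le> ennreal (fa2 x)" using lt eqf[OF x(1)] eqg[OF x(1)] by (intro ennreal_leI) simp
    finally show ?thesis using True by simp
  qed simp
  have "(\<integral>\<^sup>+x. ennreal (ge2 x) * indicator A x \<partial>lborel) + ennreal e * ennreal (b' - t0) =
      (\<integral>\<^sup>+x. ennreal (ge2 x) * indicator A x \<partial>lborel) + (\<integral>\<^sup>+x. ennreal e * indicator A x \<partial>lborel)"
    using b' by (simp add: A_def nn_integral_cmult_indicator)
  also have "\<dots> = (\<integral>\<^sup>+x. ennreal (ge2 x) * indicator A x + ennreal e * indicator A x \<partial>lborel)"
    by (rule nn_integral_add[symmetric]) measurable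
  also have "\<dots> \<le> (\<integral>\<^sup>+x. ennreal (fa2 x) * indicator A x \<partial>lborel)"
    by (rule nn_integral_mono) (rule pw)
  also have "\<dots> \<le> (\<integral>\<^sup>+x. ennreal (ge2 x) * indicator A x \<partial>lborel)" by (rule I[OF As AT])
  also have "\<dots> = (\<integral>\<^sup>+x. ennreal (ge2 x) * indicator A x \<partial>lborel) + 0" by simp
  finally have "ennreal e * ennreal (b' - t0) \<le> 0"
    using fin[OF As AT] by (subst (asm) ennreal_add_left_cancel_le) auto
  moreover have "0 < ennreal e * ennreal (b' - t0)"
  proof -
    have "ennreal e * ennreal (b' - t0) = ennreal (e * (b' - t0))" using e b' by (simp add: ennreal_mult)
    moreover have "0 < e * (b' - t0)" using e b' by simp
    ultimately show ?thesis by simp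
  qed
  ultimately show False by (metis leD)
qed

lemma count_le_int:
  fixes a v :: real and g :: real
  assumes "0 \<le> v" "a \<le> g" "g \<in> \<int>" "0 \<le> g"
  shows "(\<Sum>j. (of_bool (real j + v < a) :: ennreal)) \<le> ennreal g"
proof -
  obtain m where m: "g = of_int m" using assms(3) by (rule Ints_cases)
  define n where "n = nat m"
  have gn: "g = real n" using m assms(4) unfolding n_def by simp
  have "(\<Sum>j. (of_bool (real j + v < a) :: ennreal)) = (\<Sum>j<n. (of_bool (real j + v < a) :: ennreal))"
  proof (rule suminf_finite)
    fix j assume "j \<notin> {..<n}"
    then have "real n \<le> real j" by simp
    then show "(of_bool (real j + v < a) :: ennreal) = 0" using assms(1,2) gn by simp
  qed simp
  also have "\<dots> \<le> (\<Sum>j<n. (1::ennreal))" by (intro sum_mono) simp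
  also have "\<dots> = ennreal g" using gn by (simp add: ennreal_of_nat_eq_real_of_nat)
  finally show ?thesis .
qed

lemma cc_bound:
  fixes fa ge ge2 lam :: "real \<Rightarrow> real"
  assumes T: "0 < T" and B: "\<And>w. 0 \<le> lam w \<and> lam w \<le> T" and m[measurable]: "lam \<in> borel_measurable borel"
    and R: "\<And>t w. t \<in> {0<..<T} \<Longrightarrow> 0 \<le> w \<Longrightarrow> (t < lam w \<longleftrightarrow> w < fa t)"
    and le: "\<And>t. t \<in> {0<..<T} \<Longrightarrow> fa t \<le> ge t"
    and int: "\<And>t. t \<in> {0<..<T} \<Longrightarrow> ge t \<in> \<int>" and gnn: "\<And>t. t \<in> {0<..<T} \<Longrightarrow> 0 \<le> ge t"
    and g2[measurable]: "ge2 \<in> borel_measurable borel" and eqg: "\<And>t. t \<in> {0<..<T} \<Longrightarrow> ge2 t = ge t"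
    and tot: "(\<integral>\<^sup>+x. ennreal (ge2 x) * indicator {0<..<T} x \<partial>lborel) \<le> 1"
    and v: "v \<in> {0..<1}"
  shows "cc lam k v \<le> 1"
proof -
  have lamw: "ennreal (lam w) = (\<integral>\<^sup>+t. indicator {0<..<T} t * of_bool (t < lam w) \<partial>lborel)" for w
  proof -
    have "(\<integral>\<^sup>+t. indicator {0<..<T} t * (of_bool (t < lam w) :: ennreal) \<partial>lborel) = (\<integral>\<^sup>+t. indicator {0<..<lam w} t \<partial>lborel)"
      using B[of w] by (intro nn_integral_cong) (auto simp: indicator_def)
    also have "\<dots> = ennreal (lam w)" using B[of w] by simp
    finally show ?thesis by simp
  qed
  have "ennreal (cc lam k v) = (\<Sum>j<k. ennreal (lam (real j + v)))"
    unfolding cc_def by (rule sum_ennreal[symmetric]) (use B in auto)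
  also have "\<dots> \<le> (\<Sum>j. ennreal (lam (real j + v)))"
    by (rule sum_le_suminf) auto
  also have "\<dots> = (\<Sum>j. \<integral>\<^sup>+t. indicator {0<..<T} t * of_bool (t < lam (real j + v)) \<partial>lborel)"
    by (simp add: lamw)
  also have "\<dots> = (\<integral>\<^sup>+t. (\<Sum>j. indicator {0<..<T} t * (of_bool (t < lam (real j + v)) :: ennreal)) \<partial>lborel)"
    by (rule nn_integral_suminf[symmetric]) measurable
  also have "\<dots> \<le> (\<integral>\<^sup>+x. ennreal (ge2 x) * indicator {0<..<T} x \<partial>lborel)"
  proof (rule nn_integral_mono)
    fix t :: real
    show "(\<Sum>j. indicator {0<..<T} t * (of_bool (t < lam (real j + v)) :: ennreal)) \<le> ennreal (ge2 t) * indicator {0<..<T} t"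
    proof (cases "t \<in> {0<..<T}")
      case True
      have "(\<Sum>j. indicator {0<..<T} t * (of_bool (t < lam (real j + v)) :: ennreal)) = (\<Sum>j. (of_bool (real j + v < fa t) :: ennreal))"
      proof -
        have "\<And>j. t < lam (real j + v) \<longleftrightarrow> real j + v < fa t" using R[OF True] v by auto
        then show ?thesis using True by simp
      qed
      also have "\<dots> \<le> ennreal (ge t)"
        by (rule count_le_int) (use v le[OF True] int[OF True] gnn[OF True] in auto)
      finally show ?thesis using True eqg[OF True] by simp
    qed simp
  qed
  also have "\<dots> \<le> 1" by (rule tot)
  finally have "ennreal (cc lam k v) \<le> 1" .
  then show ?thesis by (simp add: ennreal_le_1)
qed

lemma LzXX_meas:
  assumes "lam \<in> borel_measurable borel" "\<And>w. 0 \<le> lam w \<and> lam w \<le> K"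
  shows "(\<lambda>\<omega>. Lz (XX lam \<omega>) {0..T}) \<in> path_space \<rightarrow>\<^sub>M borel"
proof -
  have "XX lam \<in> path_space \<rightarrow>\<^sub>M restrict_space path_space Hc"
    by (rule measurable_restrict_space2) (use XX_meas[OF assms] Phi_Hc[OF assms(2)] in \<open>auto simp: XX_def\<close>)
  from measurable_comp[OF this Lz_meas] show ?thesis by (simp add: comp_def)
qed

theorem mainTheorem14:
  fixes T :: real and f :: "real \<Rightarrow> real"
  assumes "0 < T" and "T \<le> 1"
    and "in_d f T (A_M T)"
    and "\<exists>g. step_fun_on g 0 T \<and> in_d g T (E_M T) \<and> (\<forall>t\<in>{0<..<T}. f t \<le> g t)"
  shows "in_d f T (I_M T)"
proof -
  note T = assms(1)
  obtain FA where FA: "FA \<in> A_M T" and dfa: "density_on FA T f"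
    using assms(3) unfolding in_d_def by blast
  obtain fa where dFa: "density_on FA T fa" and cfa: "cadlag_on fa 0 T" and nfa: "nonincr_on fa 0 T"
    using FA unfolding A_M_def by blast
  obtain g where dgE: "in_d g T (E_M T)" and fg: "\<forall>t\<in>{0<..<T}. f t \<le> g t"
    using assms(4) by blast
  obtain FE where FE: "FE \<in> E_M T" and dg: "density_on FE T g"
    using dgE unfolding in_d_def by blast
  obtain ge where dGe: "density_on FE T ge" and cge: "cadlag_on ge 0 T"
      and ige: "\<forall>t\<in>{0<..<T}. ge t \<in> \<int>"
    using FE unfolding E_M_def by blast
  have pFE: "prob_space FE" using FE unfolding E_M_def distr_on_def by blast
  define fa2 where "fa2 x = indicator {0<..<T} x * fa x" for x
  define ge2 where "ge2 x = indicator {0<..<T} x * ge x" for x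
  have fa2m[measurable]: "fa2 \<in> borel_measurable borel"
    using dFa unfolding density_on_def set_borel_measurable_def fa2_def by (simp add: measurable_lborel2)
  have ge2m[measurable]: "ge2 \<in> borel_measurable borel"
    using dGe unfolding density_on_def set_borel_measurable_def ge2_def by (simp add: measurable_lborel2)
  have fa2e: "\<And>t. t \<in> {0<..<T} \<Longrightarrow> fa2 t = fa t" by (simp add: fa2_def)
  have ge2e: "\<And>t. t \<in> {0<..<T} \<Longrightarrow> ge2 t = ge t" by (simp add: ge2_def)
  have fann: "\<And>t. t \<in> {0<..<T} \<Longrightarrow> 0 \<le> fa t" using dFa unfolding density_on_def by blast
  have gnn: "\<And>t. t \<in> {0<..<T} \<Longrightarrow> 0 \<le> ge t" using dGe unfolding density_on_def by blast
  have intFA: "\<And>A. A \<in> sets borel \<Longrightarrow> A \<subseteq> {0<..<T} \<Longrightarrow>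
      emeasure FA (ereal ` A) = (\<integral>\<^sup>+x. ennreal (fa2 x) * indicator A x \<partial>lborel)"
  proof -
    fix A :: "real set" assume A: "A \<in> sets borel" "A \<subseteq> {0<..<T}"
    have "emeasure FA (ereal ` A) = (\<integral>\<^sup>+x. ennreal (fa x) * indicator A x \<partial>lborel)"
      using dFa A unfolding density_on_def by blast
    also have "\<dots> = (\<integral>\<^sup>+x. ennreal (fa2 x) * indicator A x \<partial>lborel)"
      using A(2) by (intro nn_integral_cong) (auto simp: indicator_def fa2_def)
    finally show "emeasure FA (ereal ` A) = (\<integral>\<^sup>+x. ennreal (fa2 x) * indicator A x \<partial>lborel)" .
  qed
  have intFE: "\<And>A. A \<in> sets borel \<Longrightarrow> A \<subseteq> {0<..<T} \<Longrightarrow>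
      emeasure FE (ereal ` A) = (\<integral>\<^sup>+x. ennreal (ge2 x) * indicator A x \<partial>lborel)"
  proof -
    fix A :: "real set" assume A: "A \<in> sets borel" "A \<subseteq> {0<..<T}"
    have "emeasure FE (ereal ` A) = (\<integral>\<^sup>+x. ennreal (ge x) * indicator A x \<partial>lborel)"
      using dGe A unfolding density_on_def by blast
    also have "\<dots> = (\<integral>\<^sup>+x. ennreal (ge2 x) * indicator A x \<partial>lborel)"
      using A(2) by (intro nn_integral_cong) (auto simp: indicator_def ge2_def)
    finally show "emeasure FE (ereal ` A) = (\<integral>\<^sup>+x. ennreal (ge2 x) * indicator A x \<partial>lborel)" .
  qed
  have Ile: "\<And>A. A \<in> sets borel \<Longrightarrow> A \<subseteq> {0<..<T} \<Longrightarrow>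
      (\<integral>\<^sup>+x. ennreal (fa2 x) * indicator A x \<partial>lborel) \<le> (\<integral>\<^sup>+x. ennreal (ge2 x) * indicator A x \<partial>lborel)"
  proof -
    fix A :: "real set" assume A: "A \<in> sets borel" "A \<subseteq> {0<..<T}"
    have "(\<integral>\<^sup>+x. ennreal (fa2 x) * indicator A x \<partial>lborel) = emeasure FA (ereal ` A)"
      by (rule intFA[OF A, symmetric])
    also have "\<dots> = (\<integral>\<^sup>+x. ennreal (f x) * indicator A x \<partial>lborel)"
      using dfa A unfolding density_on_def by blast
    also have "\<dots> \<le> (\<integral>\<^sup>+x. ennreal (g x) * indicator A x \<partial>lborel)"
    proof (rule nn_integral_mono)
      fix x show "ennreal (f x) * indicator A x \<le> ennreal (g x) * indicator A x"
        using fg A(2) by (cases "x \<in> A") (auto intro!: ennreal_leI)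
    qed
    also have "\<dots> = emeasure FE (ereal ` A)"
      using dg A unfolding density_on_def by (metis (no_types, lifting))
    also have "\<dots> = (\<integral>\<^sup>+x. ennreal (ge2 x) * indicator A x \<partial>lborel)" by (rule intFE[OF A])
    finally show "(\<integral>\<^sup>+x. ennreal (fa2 x) * indicator A x \<partial>lborel) \<le> (\<integral>\<^sup>+x. ennreal (ge2 x) * indicator A x \<partial>lborel)" .
  qed
  have le1: "\<And>A. A \<in> sets borel \<Longrightarrow> A \<subseteq> {0<..<T} \<Longrightarrow> (\<integral>\<^sup>+x. ennreal (ge2 x) * indicator A x \<partial>lborel) \<le> 1"
  proof -
    fix A :: "real set" assume A: "A \<in> sets borel" "A \<subseteq> {0<..<T}"
    have "(\<integral>\<^sup>+x. ennreal (ge2 x) * indicator A x \<partial>lborel) = emeasure FE (ereal ` A)"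
      by (rule intFE[OF A, symmetric])
    also have "\<dots> \<le> 1" by (rule prob_space.emeasure_le_1[OF pFE])
    finally show "(\<integral>\<^sup>+x. ennreal (ge2 x) * indicator A x \<partial>lborel) \<le> 1" .
  qed
  have fin: "\<And>A. A \<in> sets borel \<Longrightarrow> A \<subseteq> {0<..<T} \<Longrightarrow> (\<integral>\<^sup>+x. ennreal (ge2 x) * indicator A x \<partial>lborel) < \<infinity>"
  proof -
    fix A :: "real set" assume A: "A \<in> sets borel" "A \<subseteq> {0<..<T}"
    show "(\<integral>\<^sup>+x. ennreal (ge2 x) * indicator A x \<partial>lborel) < \<infinity>"
    proof -
      have "(\<integral>\<^sup>+x. ennreal (ge2 x) * indicator A x \<partial>lborel) < top"
        using le1[OF A] ennreal_one_less_top by (rule le_less_trans)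
      then show ?thesis by (simp add: infinity_ennreal_def)
    qed
  qed
  have fage: "\<And>t. t \<in> {0<..<T} \<Longrightarrow> fa t \<le> ge t"
  proof -
    fix t assume t: "t \<in> {0<..<T}"
    show "fa t \<le> ge t"
    proof (rule dominated[OF T t _ _ fa2m ge2m fa2e ge2e gnn Ile fin])
      show "continuous (at_right t) fa" using cfa t unfolding cadlag_on_def by blast
      show "continuous (at_right t) ge" using cge t unfolding cadlag_on_def by blast
    qed auto
  qed
  define lam where "lam = lamf T fa"
  have B: "\<And>w. 0 \<le> lam w \<and> lam w \<le> T" unfolding lam_def by (rule lamf_bounds[OF T])
  have lm[measurable]: "lam \<in> borel_measurable borel" unfolding lam_def by (rule lamf_meas[OF T])
  have R: "\<And>t w. t \<in> {0<..<T} \<Longrightarrow> (t < lam w \<longleftrightarrow> w < fa t)"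
  proof -
    fix t w assume t: "t \<in> {0<..<T}"
    have "continuous (at_right t) fa" using cfa t unfolding cadlag_on_def by blast
    then show "t < lam w \<longleftrightarrow> w < fa t" unfolding lam_def by (rule lamf_char[OF T t _ nfa])
  qed
  have C: "\<And>v k. v \<in> {0..<1} \<Longrightarrow> cc lam k v \<le> 1"
  proof -
    fix v :: real and k :: nat assume v: "v \<in> {0..<1}"
    show "cc lam k v \<le> 1"
    proof (rule cc_bound[OF T B lm _ fage _ gnn ge2m ge2e _ v])
      show "\<And>t w. t \<in> {0<..<T} \<Longrightarrow> 0 \<le> w \<Longrightarrow> (t < lam w \<longleftrightarrow> w < fa t)" using R by blast
      show "\<And>t. t \<in> {0<..<T} \<Longrightarrow> ge t \<in> \<int>" using ige by blast
      show "(\<integral>\<^sup>+x. ennreal (ge2 x) * indicator {0<..<T} x \<partial>lborel) \<le> 1" by (rule le1) auto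
    qed
  qed
  have R2: "\<And>t w. t \<in> {0<..<T} \<Longrightarrow> 0 \<le> w \<Longrightarrow> (t < lam w \<longleftrightarrow> w < fa2 t)"
    using R fa2e by simp
  have fa2nn: "\<And>t. t \<in> {0<..<T} \<Longrightarrow> 0 \<le> fa2 t" using fann fa2e by simp
  define F where "F = distr MM borel (\<lambda>\<omega>. Lz (XX lam \<omega>) {0..T})"
  have FI: "F \<in> I_M T"
    unfolding I_M_def F_def using first_time_Lz stationary_MM[OF lm B] by blast
  have LXm: "(\<lambda>\<omega>. Lz (XX lam \<omega>) {0..T}) \<in> MM \<rightarrow>\<^sub>M borel"
    using LzXX_meas[OF lm B] by (simp add: measurable_cong_sets[OF sets_MM refl])
  have "density_on F T f"
    unfolding density_on_def
  proof (intro conjI ballI impI)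
    show "\<And>t. t \<in> {0<..<T} \<Longrightarrow> 0 \<le> f t" using dfa unfolding density_on_def by blast
    show "set_borel_measurable lborel {0<..<T} f" using dfa unfolding density_on_def by blast
  next
    fix A :: "real set" assume A: "A \<in> sets borel" and AT: "A \<subseteq> {0<..<T}"
    have eA: "ereal ` A \<in> sets (borel :: ereal measure)" by (rule ereal_image_borel[OF A])
    have S1: "(\<lambda>\<omega>. Lz (XX lam \<omega>) {0..T}) -` ereal ` A \<in> sets path_space"
      using measurable_sets[OF LzXX_meas[OF lm B] eA] by (simp add: space_path_space)
    have "emeasure F (ereal ` A) = emeasure MM ((\<lambda>\<omega>. Lz (XX lam \<omega>) {0..T}) -` ereal ` A)"
      unfolding F_def by (subst emeasure_distr[OF LXm eA]) simp
    also have "\<dots> = emeasure Om (Emb -` ((\<lambda>\<omega>. Lz (XX lam \<omega>) {0..T}) -` ereal ` A))"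
      unfolding MM_def by (subst emeasure_distr[OF Emb_meas S1]) simp
    also have "Emb -` ((\<lambda>\<omega>. Lz (XX lam \<omega>) {0..T}) -` ereal ` A) = {p. Lz (Phi lam p) {0..T} \<in> ereal ` A}"
      by (auto simp: XX_Emb)
    also have "emeasure Om {p. Lz (Phi lam p) {0..T} \<in> ereal ` A} = (\<integral>\<^sup>+t. ennreal (fa2 t) * indicator A t \<partial>lborel)"
      by (rule emeasure_Q[OF lm B C T fa2m fa2nn R2 A AT])
    also have "\<dots> = emeasure FA (ereal ` A)" by (rule intFA[OF A AT, symmetric])
    also have "\<dots> = (\<integral>\<^sup>+x. ennreal (f x) * indicator A x \<partial>lborel)"
      using dfa A AT unfolding density_on_def by blast
    finally show "emeasure F (ereal ` A) = (\<integral>\<^sup>+x\<in>A. ennreal (f x) \<partial>lborel)" .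
  qed
  then show ?thesis unfolding in_d_def using FI by blast
qed

end
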